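(* Let $U\subset\mathbb{R}^n$ and $V\subset\mathbb{R}^m$ be open, let $X\subset U$ be closed in $U$, and let $\varphi:V\to U$ be a $\mathcal{C}^p$ mapping with $\varphi(V)\subset X$. Let $f:X\to\mathbb{R}$, set $g=f\circ\varphi$, and suppose $\nabla^pf:\tau^p(X)\to\mathbb{R}$. Then: (1) $g\in\mathcal{C}^p(V)$; (2) $g$ is formally a composite with $\varphi$: for every $a\in X$ there exists $P\in\mathcal{P}_p(\mathbb{R}^n)$ such that $g-P\circ\varphi$ is $p$-flat (all partial derivatives of order $\le p$ vanish) at every point $b\in\varphi^{-1}(a)$.
   Context: $\mathcal{P}_p=\mathcal{P}_p(\mathbb{R}^n)$: real polynomials on $\mathbb{R}^n$ of degree $\le p$; $\mathcal{P}_p^*$ dual; $r=\dim\mathcal{P}_p$. For $\xi\in\mathcal{P}_p^*$, $b\in\mathbb{R}^n$, $|\alpha|\le p$: $\xi_\alpha(b):=\xi(\tfrac1{\alpha!}(x-b)^\alpha)$; $\delta_a(P)=P(a)$. A bundle over $X$ with fibres in $W$ is a subset of $X\times W$ with linear-subspace fibres. For a bundle $E\subset X\times\mathcal{P}_p^*$: $\Delta E=\{(a,b,\xi+\eta):a,b\in X,\xi\in E_a,\eta\in E_b,|a-b|^{p-|\alpha|}|\eta_\alpha(b)|\le1\ \forall|\alpha|\le p\}$, $E'=\{(a,\xi):(a,a,\xi)\in\overline{\Delta E}\}$, $\rho(E)=\{(a,\xi):\xi\in\operatorname{Span}E'_a\}$; $\tau^p(X):=\rho^{2r}(E_0)$ with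 $E_0=\{(a,\lambda\delta_a)\}$ (iterates constant from $2r$ on). For bundles $\Phi\subset X\times(\mathcal{P}_p^*\times\mathbb{R})$: $\Delta\Phi=\{(a,b,\xi+\eta,\lambda+\mu):(\xi,\lambda)\in\Phi_a,(\eta,\mu)\in\Phi_b,|a-b|^{p-|\alpha|}|\eta_\alpha(b)|\le1\ \forall|\alpha|\le p\}$, $\Phi'=\{(a,\xi,\lambda):(a,a,\xi,\lambda)\in\overline{\Delta\Phi}\}$, $\rho(\Phi)$ fibrewise span of $\Phi'$; $\nabla^pf:=\rho^{2(r+1)}(\Phi_0)$ with $\Phi_0=\{(a,\lambda\delta_a,\lambda f(a))\}$. "$\nabla^pf:\tau^p(X)\to\mathbb{R}$" means each $\xi\in\tau^p_a(X)$ has exactly one $\lambda$ with $(a,\xi,\lambda)\in\nabla^pf$. *)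

theory Defs
  imports "HOL-Analysis.Analysis"
begin

definition mi_abs :: "('n::finite \<Rightarrow> nat) \<Rightarrow> nat" where
  "mi_abs \<alpha> = (\<Sum>i\<in>UNIV. \<alpha> i)"

definition MI :: "nat \<Rightarrow> ('n::finite \<Rightarrow> nat) set" where
  "MI p = {\<alpha>. mi_abs \<alpha> \<le> p}"

definition mi_fact :: "('n::finite \<Rightarrow> nat) \<Rightarrow> real" where
  "mi_fact \<alpha> = (\<Prod>i\<in>UNIV. fact (\<alpha> i))"

definition mono :: "('n::finite \<Rightarrow> nat) \<Rightarrow> real^'n \<Rightarrow> real" where
  "mono \<alpha> x = (\<Prod>i\<in>UNIV. (x $ i) ^ (\<alpha> i))"

definition polys :: "nat \<Rightarrow> (real^'n::finite \<Rightarrow> real) set" where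
  "polys p = {P. \<exists>c. P = (\<lambda>x. \<Sum>\<alpha>\<in>MI p. c \<alpha> * mono \<alpha> x)}"

(* A functional xi on P_p is represented by its values on the monomial basis:
   xi \<alpha> = xi(x^\<alpha>) for |\<alpha>| \<le> p, and 0 for other \<alpha>. *)
definition dual_ev :: "nat \<Rightarrow> (('n::finite \<Rightarrow> nat) \<Rightarrow> real) \<Rightarrow> (('n \<Rightarrow> nat) \<Rightarrow> real) \<Rightarrow> real" where
  "dual_ev p \<xi> c = (\<Sum>\<alpha>\<in>MI p. c \<alpha> * \<xi> \<alpha>)"

(* coefficients (in the monomial basis) of (x - b)^\<alpha> / \<alpha>! *)
definition shifted_mono_coeff :: "('n::finite \<Rightarrow> nat) \<Rightarrow> real^'n \<Rightarrow> ('n \<Rightarrow> nat) \<Rightarrow> real" where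
  "shifted_mono_coeff \<alpha> b \<beta> =
     (if (\<forall>i. \<beta> i \<le> \<alpha> i)
      then (\<Prod>i\<in>UNIV. real (\<alpha> i choose \<beta> i) * (- (b $ i)) ^ (\<alpha> i - \<beta> i)) / mi_fact \<alpha>
      else 0)"

definition jet :: "nat \<Rightarrow> (('n::finite \<Rightarrow> nat) \<Rightarrow> real) \<Rightarrow> ('n \<Rightarrow> nat) \<Rightarrow> real^'n \<Rightarrow> real" where
  "jet p \<xi> \<alpha> b = dual_ev p \<xi> (shifted_mono_coeff \<alpha> b)"

definition delta :: "nat \<Rightarrow> real^'n::finite \<Rightarrow> ('n \<Rightarrow> nat) \<Rightarrow> real" where
  "delta p a = (\<lambda>\<alpha>. if \<alpha> \<in> MI p then mono \<alpha> a else 0)"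

definition lin_span :: "('a \<Rightarrow> real) set \<Rightarrow> ('a \<Rightarrow> real) set" where
  "lin_span S = {v. \<exists>F c. finite F \<and> F \<subseteq> S \<and> v = (\<lambda>x. \<Sum>u\<in>F. c u * u x)}"

definition lin_span2 :: "(('a \<Rightarrow> real) \<times> real) set \<Rightarrow> (('a \<Rightarrow> real) \<times> real) set" where
  "lin_span2 S = {v. \<exists>F c. finite F \<and> F \<subseteq> S \<and>
      v = ((\<lambda>x. \<Sum>u\<in>F. c u * fst u x), (\<Sum>u\<in>F. c u * snd u))}"

definition DeltaE :: "nat \<Rightarrow> (real^'n::finite) set \<Rightarrow> ((real^'n) \<times> (('n \<Rightarrow> nat) \<Rightarrow> real)) set
    \<Rightarrow> ((real^'n) \<times> (real^'n) \<times> (('n \<Rightarrow> nat) \<Rightarrow> real)) set" where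
  "DeltaE p X E = {(a, b, \<zeta>). a \<in> X \<and> b \<in> X \<and> (\<exists>\<xi> \<eta>. (a, \<xi>) \<in> E \<and> (b, \<eta>) \<in> E \<and>
      \<zeta> = (\<lambda>\<alpha>. \<xi> \<alpha> + \<eta> \<alpha>) \<and>
      (\<forall>\<alpha>\<in>MI p. norm (a - b) ^ (p - mi_abs \<alpha>) * \<bar>jet p \<eta> \<alpha> b\<bar> \<le> 1))}"

definition primeE :: "nat \<Rightarrow> (real^'n::finite) set \<Rightarrow> ((real^'n) \<times> (('n \<Rightarrow> nat) \<Rightarrow> real)) set
    \<Rightarrow> ((real^'n) \<times> (('n \<Rightarrow> nat) \<Rightarrow> real)) set" where
  "primeE p X E = {(a, \<xi>). a \<in> X \<and> (a, a, \<xi>) \<in> closure (DeltaE p X E)}"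

definition rhoE :: "nat \<Rightarrow> (real^'n::finite) set \<Rightarrow> ((real^'n) \<times> (('n \<Rightarrow> nat) \<Rightarrow> real)) set
    \<Rightarrow> ((real^'n) \<times> (('n \<Rightarrow> nat) \<Rightarrow> real)) set" where
  "rhoE p X E = {(a, \<xi>). a \<in> X \<and> \<xi> \<in> lin_span {\<eta>. (a, \<eta>) \<in> primeE p X E}}"

definition E0 :: "nat \<Rightarrow> (real^'n::finite) set \<Rightarrow> ((real^'n) \<times> (('n \<Rightarrow> nat) \<Rightarrow> real)) set" where
  "E0 p X = {(a, \<xi>). a \<in> X \<and> (\<exists>l::real. \<xi> = (\<lambda>\<alpha>. l * delta p a \<alpha>))}"

definition dimP :: "nat \<Rightarrow> 'n::finite itself \<Rightarrow> nat" where
  "dimP p _ = card (MI p :: ('n \<Rightarrow> nat) set)"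

definition tau :: "nat \<Rightarrow> (real^'n::finite) set \<Rightarrow> ((real^'n) \<times> (('n \<Rightarrow> nat) \<Rightarrow> real)) set" where
  "tau p X = (rhoE p X ^^ (2 * dimP p TYPE('n))) (E0 p X)"

definition DeltaPhi :: "nat \<Rightarrow> (real^'n::finite) set \<Rightarrow> ((real^'n) \<times> (('n \<Rightarrow> nat) \<Rightarrow> real) \<times> real) set
    \<Rightarrow> ((real^'n) \<times> (real^'n) \<times> (('n \<Rightarrow> nat) \<Rightarrow> real) \<times> real) set" where
  "DeltaPhi p X \<Phi> = {(a, b, \<zeta>, \<nu>). a \<in> X \<and> b \<in> X \<and> (\<exists>\<xi> l \<eta> \<mu>. (a, \<xi>, l) \<in> \<Phi> \<and> (b, \<eta>, \<mu>) \<in> \<Phi> \<and>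
      \<zeta> = (\<lambda>\<alpha>. \<xi> \<alpha> + \<eta> \<alpha>) \<and> \<nu> = l + \<mu> \<and>
      (\<forall>\<alpha>\<in>MI p. norm (a - b) ^ (p - mi_abs \<alpha>) * \<bar>jet p \<eta> \<alpha> b\<bar> \<le> 1))}"

definition primePhi :: "nat \<Rightarrow> (real^'n::finite) set \<Rightarrow> ((real^'n) \<times> (('n \<Rightarrow> nat) \<Rightarrow> real) \<times> real) set
    \<Rightarrow> ((real^'n) \<times> (('n \<Rightarrow> nat) \<Rightarrow> real) \<times> real) set" where
  "primePhi p X \<Phi> = {(a, \<xi>, l). a \<in> X \<and> (a, a, \<xi>, l) \<in> closure (DeltaPhi p X \<Phi>)}"

definition rhoPhi :: "nat \<Rightarrow> (real^'n::finite) set \<Rightarrow> ((real^'n) \<times> (('n \<Rightarrow> nat) \<Rightarrow> real) \<times> real) set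
    \<Rightarrow> ((real^'n) \<times> (('n \<Rightarrow> nat) \<Rightarrow> real) \<times> real) set" where
  "rhoPhi p X \<Phi> = {(a, \<xi>, l). a \<in> X \<and> (\<xi>, l) \<in> lin_span2 {(\<eta>, \<mu>). (a, \<eta>, \<mu>) \<in> primePhi p X \<Phi>}}"

definition Phi0 :: "nat \<Rightarrow> (real^'n::finite) set \<Rightarrow> (real^'n \<Rightarrow> real) \<Rightarrow> ((real^'n) \<times> (('n \<Rightarrow> nat) \<Rightarrow> real) \<times> real) set" where
  "Phi0 p X f = {(a, \<xi>, \<nu>). a \<in> X \<and> (\<exists>l::real. \<xi> = (\<lambda>\<alpha>. l * delta p a \<alpha>) \<and> \<nu> = l * f a)}"

definition nabla :: "nat \<Rightarrow> (real^'n::finite) set \<Rightarrow> (real^'n \<Rightarrow> real) \<Rightarrow> ((real^'n) \<times> (('n \<Rightarrow> nat) \<Rightarrow> real) \<times> real) set" where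
  "nabla p X f = (rhoPhi p X ^^ (2 * (dimP p TYPE('n) + 1))) (Phi0 p X f)"

(* "nabla^p f : tau^p(X) -> R" *)
definition nabla_is_function :: "nat \<Rightarrow> (real^'n::finite) set \<Rightarrow> (real^'n \<Rightarrow> real) \<Rightarrow> bool" where
  "nabla_is_function p X f \<longleftrightarrow>
     (\<forall>a \<xi>. (a, \<xi>) \<in> tau p X \<longrightarrow> (\<exists>!l. (a, \<xi>, l) \<in> nabla p X f))"

definition partial :: "'m::finite \<Rightarrow> (real^'m \<Rightarrow> real) \<Rightarrow> real^'m \<Rightarrow> real" where
  "partial i h x = deriv (\<lambda>t. h (x + t *\<^sub>R axis i 1)) 0"

fun partial_iter :: "'m::finite list \<Rightarrow> (real^'m \<Rightarrow> real) \<Rightarrow> real^'m \<Rightarrow> real" where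
  "partial_iter [] h = h"
| "partial_iter (i # is) h = partial i (partial_iter is h)"

fun Ck :: "nat \<Rightarrow> (real^'m::finite) set \<Rightarrow> (real^'m \<Rightarrow> real) \<Rightarrow> bool" where
  "Ck 0 V h = continuous_on V h"
| "Ck (Suc k) V h = (continuous_on V h \<and>
     (\<forall>i. \<forall>x\<in>V. (\<lambda>t. h (x + t *\<^sub>R axis i 1)) differentiable (at 0)) \<and>
     (\<forall>i. Ck k V (partial i h)))"

definition Ck_map :: "nat \<Rightarrow> (real^'m::finite) set \<Rightarrow> (real^'m \<Rightarrow> real^'n::finite) \<Rightarrow> bool" where
  "Ck_map k V \<phi> \<longleftrightarrow> (\<forall>j. Ck k V (\<lambda>x. \<phi> x $ j))"

definition flat_at :: "nat \<Rightarrow> (real^'m::finite \<Rightarrow> real) \<Rightarrow> real^'m \<Rightarrow> bool" where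
  "flat_at p h b \<longleftrightarrow> (\<forall>js. length js \<le> p \<longrightarrow> partial_iter js h b = 0)"

end

theory Submission
  imports Defs
begin


lemma ev_line:
  fixes x v :: "'a::real_normed_vector"
  assumes "open V" "x \<in> V"
  shows "eventually (\<lambda>t::real. x + t *\<^sub>R v \<in> V) (nhds 0)"
proof -
  obtain e where e: "e > 0" "ball x e \<subseteq> V" using assms open_contains_ball by blast
  have "\<forall>t. dist t 0 < e / (norm v + 1) \<longrightarrow> x + t *\<^sub>R v \<in> V"
  proof (intro allI impI)
    fix t :: real assume "dist t 0 < e / (norm v + 1)"
    moreover have "norm v + 1 > 0" using norm_ge_zero[of v] by linarith
    ultimately have t: "\<bar>t\<bar> * (norm v + 1) < e" by (simp add: pos_less_divide_eq)
    have "norm (t *\<^sub>R v) = \<bar>t\<bar> * norm v" by simp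
    also have "\<dots> \<le> \<bar>t\<bar> * (norm v + 1)" by (simp add: mult_left_mono)
    finally have "norm (t *\<^sub>R v) < e" using t by linarith
    then show "x + t *\<^sub>R v \<in> V" using e by (auto simp: dist_norm)
  qed
  moreover have "e / (norm v + 1) > 0" using e norm_ge_zero[of v] by (intro divide_pos_pos) linarith+
  ultimately show ?thesis unfolding eventually_nhds_metric by blast
qed

lemma partial_cong:
  assumes "open V" "x \<in> V" "\<And>y. y \<in> V \<Longrightarrow> h y = h' y"
  shows "partial i h x = partial i h' x"
  unfolding partial_def
  by (rule deriv_cong_ev) (use ev_line[OF assms(1,2), of "axis i 1"] in \<open>auto elim: eventually_mono simp: assms(3)\<close>)

lemma diff_cong:
  fixes h h' :: "real^'m::finite \<Rightarrow> real"
  assumes "open V" "x \<in> V" "\<And>y. y \<in> V \<Longrightarrow> h y = h' y"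
    and "(\<lambda>t. h (x + t *\<^sub>R axis i 1)) differentiable (at 0)"
  shows "(\<lambda>t. h' (x + t *\<^sub>R axis i 1)) differentiable (at 0)"
proof -
  obtain D where D: "((\<lambda>t. h (x + t *\<^sub>R axis i 1)) has_real_derivative D) (at 0)"
    using assms(4) real_differentiable_def by blast
  have ev: "eventually (\<lambda>t. h (x + t *\<^sub>R axis i 1) = h' (x + t *\<^sub>R axis i 1)) (nhds 0)"
    using ev_line[OF assms(1,2), of "axis i 1"] by (auto elim: eventually_mono simp: assms(3))
  have "((\<lambda>t. h' (x + t *\<^sub>R axis i 1)) has_real_derivative D) (at 0)"
    using DERIV_cong_ev[OF refl ev refl] D by simp
  then show ?thesis using real_differentiable_def by blast
qed

lemma line_DERIV:
  assumes "(\<lambda>t. h (x + t *\<^sub>R axis i 1)) differentiable (at 0)"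
  shows "((\<lambda>t. h (x + t *\<^sub>R axis i 1)) has_real_derivative partial i h x) (at 0)"
proof -
  obtain D where D: "((\<lambda>t. h (x + t *\<^sub>R axis i 1)) has_real_derivative D) (at 0)"
    using assms real_differentiable_def by blast
  then show ?thesis unfolding partial_def using DERIV_imp_deriv by metis
qed

lemma partial_add:
  assumes "(\<lambda>t. h1 (x + t *\<^sub>R axis i 1)) differentiable (at 0)"
    "(\<lambda>t. h2 (x + t *\<^sub>R axis i 1)) differentiable (at 0)"
  shows "partial i (\<lambda>y. h1 y + h2 y) x = partial i h1 x + partial i h2 x"
  unfolding partial_def[of i "\<lambda>y. h1 y + h2 y"]
  by (rule DERIV_imp_deriv) (rule DERIV_add[OF line_DERIV[OF assms(1)] line_DERIV[OF assms(2)]])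

lemma partial_mult:
  assumes "(\<lambda>t. h1 (x + t *\<^sub>R axis i 1)) differentiable (at 0)"
    "(\<lambda>t. h2 (x + t *\<^sub>R axis i 1)) differentiable (at 0)"
  shows "partial i (\<lambda>y. h1 y * h2 y) x = partial i h1 x * h2 x + h1 x * partial i h2 x"
proof -
  have "((\<lambda>t. h1 (x + t *\<^sub>R axis i 1) * h2 (x + t *\<^sub>R axis i 1)) has_real_derivative
      partial i h1 x * h2 (x + 0 *\<^sub>R axis i 1) + partial i h2 x * h1 (x + 0 *\<^sub>R axis i 1)) (at 0)"
    by (rule DERIV_mult[OF line_DERIV[OF assms(1)] line_DERIV[OF assms(2)]])
  then show ?thesis unfolding partial_def[of i "\<lambda>y. h1 y * h2 y"]
    by (simp add: DERIV_imp_deriv mult.commute)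
qed

lemma partial_const: "partial i (\<lambda>y. c) x = 0"
  unfolding partial_def by (simp add: DERIV_imp_deriv)

lemma Ck_cont: "Ck k V h \<Longrightarrow> continuous_on V h"
  by (cases k) auto

lemma Ck_cong:
  assumes "open V" "Ck k V h" "\<And>x. x \<in> V \<Longrightarrow> h x = h' x"
  shows "Ck k V h'"
  using assms(2,3)
proof (induction k arbitrary: h h')
  case 0
  have "continuous_on V h'" using continuous_on_cong[of V V h h'] 0 by simp
  then show ?case by simp
next
  case (Suc k)
  have c: "continuous_on V h'" using Suc.prems continuous_on_cong[of V V h h'] by simp
  have d: "\<forall>i. \<forall>x\<in>V. (\<lambda>t. h' (x + t *\<^sub>R axis i 1)) differentiable (at 0)"
  proof (intro allI ballI)
    fix i x assume "x \<in> V"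
    then show "(\<lambda>t. h' (x + t *\<^sub>R axis i 1)) differentiable (at 0)"
      using Suc.prems(1) diff_cong[OF assms(1), of x h h' i] Suc.prems(2) by simp
  qed
  have "Ck k V (partial i h')" for i
  proof (rule Suc.IH[of "partial i h" "partial i h'"])
    show "Ck k V (partial i h)" using Suc.prems(1) by simp
    fix x assume "x \<in> V"
    then show "partial i h x = partial i h' x" using partial_cong[OF assms(1), of x h h' i] Suc.prems(2) by blast
  qed
  then show ?case using c d by simp
qed

lemma Ck_down: "Ck (Suc k) V h \<Longrightarrow> Ck k V h"
proof (induction k arbitrary: h)
  case 0 then show ?case by simp
next
  case (Suc k) then show ?case by simp
qed

lemma Ck_le: "Ck k V h \<Longrightarrow> k' \<le> k \<Longrightarrow> Ck k' V h"
proof (induction k)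
  case 0 then show ?case by simp
next
  case (Suc k) then show ?case using Ck_down[of k V h] le_Suc_eq[of k' k] by metis
qed

lemma Ck_const: "Ck k V (\<lambda>x. c)"
proof (induction k arbitrary: c)
  case 0 then show ?case by simp
next
  case (Suc k)
  have eq: "partial i (\<lambda>x. c) = (\<lambda>x. 0)" for i by (rule ext) (simp add: partial_const)
  have "Ck k V (partial i (\<lambda>x. c))" for i unfolding eq by (rule Suc.IH)
  then show ?case by simp
qed

lemma Ck_add:
  assumes "open V" "Ck k V h1" "Ck k V h2"
  shows "Ck k V (\<lambda>x. h1 x + h2 x)"
  using assms(2,3)
proof (induction k arbitrary: h1 h2)
  case 0 then show ?case by (simp add: continuous_on_add)
next
  case (Suc k)
  have c: "continuous_on V (\<lambda>x. h1 x + h2 x)" using Suc.prems by (simp add: continuous_on_add)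
  have d: "\<forall>i. \<forall>x\<in>V. (\<lambda>t. h1 (x + t *\<^sub>R axis i 1) + h2 (x + t *\<^sub>R axis i 1)) differentiable (at 0)"
    using Suc.prems by (auto intro!: differentiable_add)
  have "Ck k V (partial i (\<lambda>x. h1 x + h2 x))" for i
  proof -
    have "Ck k V (\<lambda>x. partial i h1 x + partial i h2 x)" using Suc by simp
    then show ?thesis
    proof (rule Ck_cong[OF assms(1)])
      fix x assume "x \<in> V"
      then show "partial i h1 x + partial i h2 x = partial i (\<lambda>x. h1 x + h2 x) x"
        using Suc.prems partial_add[of h1 x i h2] by simp
    qed
  qed
  then show ?case using c d by simp
qed

lemma Ck_mult:
  assumes "open V" "Ck k V h1" "Ck k V h2"
  shows "Ck k V (\<lambda>x. h1 x * h2 x)"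
  using assms(2,3)
proof (induction k arbitrary: h1 h2)
  case 0 then show ?case by (simp add: continuous_on_mult)
next
  case (Suc k)
  have c: "continuous_on V (\<lambda>x. h1 x * h2 x)" using Suc.prems by (simp add: continuous_on_mult)
  have d: "\<forall>i. \<forall>x\<in>V. (\<lambda>t. h1 (x + t *\<^sub>R axis i 1) * h2 (x + t *\<^sub>R axis i 1)) differentiable (at 0)"
    using Suc.prems by (auto intro!: differentiable_mult)
  have "Ck k V (partial i (\<lambda>x. h1 x * h2 x))" for i
  proof -
    have k1: "Ck k V h1" "Ck k V h2" using Suc.prems Ck_down by blast+
    have "Ck k V (\<lambda>x. partial i h1 x * h2 x + h1 x * partial i h2 x)"
      using Suc.prems k1 by (auto intro!: Ck_add[OF assms(1)] Suc.IH)
    then show ?thesis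
    proof (rule Ck_cong[OF assms(1)])
      fix x assume "x \<in> V"
      then show "partial i h1 x * h2 x + h1 x * partial i h2 x = partial i (\<lambda>x. h1 x * h2 x) x"
        using Suc.prems partial_mult[of h1 x i h2] by simp
    qed
  qed
  then show ?case using c d by simp
qed

lemma Ck_cmult: "open V \<Longrightarrow> Ck k V h \<Longrightarrow> Ck k V (\<lambda>x. c * h x)"
  using Ck_mult[OF _ Ck_const] by blast

lemma Ck_diff: "open V \<Longrightarrow> Ck k V h1 \<Longrightarrow> Ck k V h2 \<Longrightarrow> Ck k V (\<lambda>x. h1 x - h2 x)"
  using Ck_add[of V k h1 "\<lambda>x. (-1) * h2 x"] Ck_cmult[of V k h2 "-1"] by simp

lemma Ck_sum: assumes "open V" "finite B" "\<And>b. b \<in> B \<Longrightarrow> Ck k V (h b)" shows "Ck k V (\<lambda>x. \<Sum>b\<in>B. h b x)"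
  using assms(2,3)
proof (induction B rule: finite_induct)
  case empty then show ?case using Ck_const[of k V 0] by simp
next
  case (insert b B)
  then have "Ck k V (\<lambda>x. h b x + (\<Sum>b\<in>B. h b x))" by (intro Ck_add[OF assms(1)]) simp_all
  then show ?case using insert by simp
qed

lemma Ck_prod: assumes "open V" "finite B" "\<And>b. b \<in> B \<Longrightarrow> Ck k V (h b)" shows "Ck k V (\<lambda>x. \<Prod>b\<in>B. h b x)"
  using assms(2,3)
proof (induction B rule: finite_induct)
  case empty then show ?case using Ck_const[of k V 1] by simp
next
  case (insert b B)
  then have "Ck k V (\<lambda>x. h b x * (\<Prod>b\<in>B. h b x))" by (intro Ck_mult[OF assms(1)]) simp_all
  then show ?case using insert by simp
qed

lemma Ck_power: assumes "open V" "Ck k V h" shows "Ck k V (\<lambda>x. h x ^ e)"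
proof (induction e)
  case 0 then show ?case using Ck_const by simp
next
  case (Suc e) then show ?case using Ck_mult[OF assms(1,2) Suc] by simp
qed



lemma partial_iter_append: "partial_iter (js @ [i]) h = partial_iter js (partial i h)"
  by (induction js) auto

lemma Ck_partial_iter: "Ck k V h \<Longrightarrow> length js \<le> k \<Longrightarrow> Ck (k - length js) V (partial_iter js h)"
proof (induction js)
  case Nil then show ?case by simp
next
  case (Cons j js)
  have l: "length js \<le> k" using Cons.prems(2) by simp
  have eq: "k - length js = Suc (k - Suc (length js))" using Cons.prems(2) by simp
  have c: "Ck (Suc (k - Suc (length js))) V (partial_iter js h)"
    using Cons.IH[OF Cons.prems(1) l] unfolding eq .
  then show ?case by simp
qed

lemma Ck_pi_cont: "Ck k V h \<Longrightarrow> length js \<le> k \<Longrightarrow> continuous_on V (partial_iter js h)"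
  using Ck_partial_iter Ck_cont by blast

lemma Ck_pi_diff: "Ck k V h \<Longrightarrow> length js < k \<Longrightarrow> x \<in> V \<Longrightarrow>
    (\<lambda>t. partial_iter js h (x + t *\<^sub>R axis i 1)) differentiable (at 0)"
proof -
  assume a: "Ck k V h" "length js < k" "x \<in> V"
  then have "Ck (Suc (k - Suc (length js))) V (partial_iter js h)"
    using Ck_partial_iter[of k V h js] by (simp add: Suc_diff_Suc)
  then show ?thesis using a(3) by simp
qed

lemma Ck_of_partials:
  assumes "\<And>js. length js \<le> k \<Longrightarrow> continuous_on V (partial_iter js h)"
    "\<And>js i x. length js < k \<Longrightarrow> x \<in> V \<Longrightarrow> (\<lambda>t. partial_iter js h (x + t *\<^sub>R axis i 1)) differentiable (at 0)"
  shows "Ck k V h"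
  using assms
proof (induction k arbitrary: h)
  case 0 then show ?case using 0(1)[of "[]"] by simp
next
  case (Suc k)
  have "Ck k V (partial i h)" for i
  proof (rule Suc.IH)
    fix js :: "'a list" assume "length js \<le> k"
    then show "continuous_on V (partial_iter js (partial i h))"
      using Suc.prems(1)[of "js @ [i]"] by (simp add: partial_iter_append)
  next
    fix js :: "'a list" and i' x assume "length js < k" "x \<in> V"
    then show "(\<lambda>t. partial_iter js (partial i h) (x + t *\<^sub>R axis i' 1)) differentiable (at 0)"
      using Suc.prems(2)[of "js @ [i]"] by (simp add: partial_iter_append)
  qed
  then show ?case using Suc.prems(1)[of "[]"] Suc.prems(2)[of "[]"] by simp
qed

lemma pi_zero: "partial_iter js (\<lambda>y. 0) = (\<lambda>y. 0)"
  by (induction js) (auto simp: partial_const)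

lemma pi_add:
  assumes "open V" "Ck k V h1" "Ck k V h2" "length js \<le> k" "x \<in> V"
  shows "partial_iter js (\<lambda>y. h1 y + h2 y) x = partial_iter js h1 x + partial_iter js h2 x"
  using assms(4,5)
proof (induction js arbitrary: x)
  case Nil then show ?case by simp
next
  case (Cons j js)
  have "partial_iter (j # js) (\<lambda>y. h1 y + h2 y) x
      = partial j (\<lambda>y. partial_iter js h1 y + partial_iter js h2 y) x"
    using Cons partial_cong[OF assms(1) Cons.prems(2), of "partial_iter js (\<lambda>y. h1 y + h2 y)"] by simp
  also have "\<dots> = partial_iter (j # js) h1 x + partial_iter (j # js) h2 x"
    using partial_add[of "partial_iter js h1" x j "partial_iter js h2"]
      Ck_pi_diff[OF assms(2), of js x j] Ck_pi_diff[OF assms(3), of js x j] Cons.prems by simp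
  finally show ?case .
qed

lemma pi_cmult:
  assumes "open V" "Ck k V h" "length js \<le> k" "x \<in> V"
  shows "partial_iter js (\<lambda>y. c * h y) x = c * partial_iter js h x"
  using assms(3,4)
proof (induction js arbitrary: x)
  case Nil then show ?case by simp
next
  case (Cons j js)
  have "partial_iter (j # js) (\<lambda>y. c * h y) x = partial j (\<lambda>y. c * partial_iter js h y) x"
    using Cons partial_cong[OF assms(1) Cons.prems(2), of "partial_iter js (\<lambda>y. c * h y)"] by simp
  also have "\<dots> = c * partial_iter (j # js) h x"
    using partial_mult[of "\<lambda>y. c" x j "partial_iter js h"] Ck_pi_diff[OF assms(2), of js x j] Cons.prems
    by (simp add: partial_const)
  finally show ?case .
qed

lemma pi_sum:
  assumes "open V" "finite B" "\<And>b. b \<in> B \<Longrightarrow> Ck k V (h b)" "length js \<le> k" "x \<in> V"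
  shows "partial_iter js (\<lambda>y. \<Sum>b\<in>B. c b * h b y) x = (\<Sum>b\<in>B. c b * partial_iter js (h b) x)"
  using assms(2,3)
proof (induction B rule: finite_induct)
  case empty then show ?case by (simp add: pi_zero)
next
  case (insert b B)
  have "partial_iter js (\<lambda>y. \<Sum>b\<in>insert b B. c b * h b y) x
     = partial_iter js (\<lambda>y. c b * h b y + (\<Sum>b\<in>B. c b * h b y)) x" using insert by simp
  also have "\<dots> = partial_iter js (\<lambda>y. c b * h b y) x + partial_iter js (\<lambda>y. \<Sum>b\<in>B. c b * h b y) x"
    by (rule pi_add[OF assms(1) _ _ assms(4,5)])
      (use insert in \<open>auto intro!: Ck_cmult[OF assms(1)] Ck_sum[OF assms(1)]\<close>)
  also have "\<dots> = (\<Sum>b\<in>insert b B. c b * partial_iter js (h b) x)"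
    using insert pi_cmult[OF assms(1) _ assms(4,5)] by simp
  finally show ?case .
qed

lemma pi_diff:
  assumes "open V" "Ck k V h1" "Ck k V h2" "length js \<le> k" "x \<in> V"
  shows "partial_iter js (\<lambda>y. h1 y - h2 y) x = partial_iter js h1 x - partial_iter js h2 x"
  using pi_add[OF assms(1,2) Ck_cmult[OF assms(1,3), of "-1"] assms(4,5)]
    pi_cmult[OF assms(1,3,4,5), of "-1"] by simp

section \<open>vanishing\<close>

inductive van :: "(real^'m::finite) set \<Rightarrow> real^'m \<Rightarrow> nat \<Rightarrow> nat \<Rightarrow> (real^'m \<Rightarrow> real) \<Rightarrow> bool"
  for V z where
  base: "Ck k V h \<Longrightarrow> van V z 0 k h"
| fac: "Ck k V u \<Longrightarrow> u z = 0 \<Longrightarrow> van V z N k h \<Longrightarrow> van V z (Suc N) k (\<lambda>w. u w * h w)"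
| mul: "Ck k V v \<Longrightarrow> van V z N k h \<Longrightarrow> van V z N k (\<lambda>w. v w * h w)"
| add: "van V z N k h1 \<Longrightarrow> van V z N k h2 \<Longrightarrow> van V z N k (\<lambda>w. h1 w + h2 w)"
| cong: "van V z N k h \<Longrightarrow> (\<And>w. w \<in> V \<Longrightarrow> h w = h' w) \<Longrightarrow> van V z N k h'"

context
  fixes V :: "(real^'m::finite) set" and z
  assumes oV: "open V" and zV: "z \<in> V"
begin

lemma van_Ck: "van V z N k h \<Longrightarrow> Ck k V h"
proof (induction rule: van.induct)
  case (base k h) then show ?case .
next
  case (fac k u N h) then show ?case using Ck_mult[OF oV] by blast
next
  case (mul k v N h) then show ?case using Ck_mult[OF oV] by blast
next
  case (add N k h1 h2) then show ?case using Ck_add[OF oV] by blast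
next
  case (cong N k h h') then show ?case using Ck_cong[OF oV] by blast
qed

lemma van_zero: "van V z N k h \<Longrightarrow> 0 < N \<Longrightarrow> h z = 0"
proof (induction rule: van.induct)
  case (base k h) then show ?case by simp
next
  case (fac k u N h) then show ?case by simp
next
  case (mul k v N h) then show ?case by simp
next
  case (add N k h1 h2) then show ?case by simp
next
  case (cong N k h h') then show ?case using zV by metis
qed

lemma van_Ndown: "van V z N k h \<Longrightarrow> van V z (N - 1) k h"
proof (induction rule: van.induct)
  case (base k h) then show ?case using van.base by simp
next
  case (fac k u N h)
  have "van V z N k (\<lambda>w. u w * h w)" by (rule van.mul[OF fac(1,3)])
  then show ?case by simp
next
  case (mul k v N h) then show ?case using van.mul[OF mul(1) mul(3)] by simp
next
  case (add N k h1 h2) then show ?case using van.add[OF add(3) add(4)] by simp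
next
  case (cong N k h h') then show ?case using van.cong[OF cong(3) cong(2)] by simp
qed

lemma van_Nsub: "van V z N k h \<Longrightarrow> van V z (N - d) k h"
proof (induction d)
  case 0 then show ?case by simp
next
  case (Suc d)
  have "van V z (N - d - 1) k h" by (rule van_Ndown[OF Suc.IH[OF Suc.prems]])
  moreover have "N - d - 1 = N - Suc d" by simp
  ultimately show ?case by metis
qed

lemma van_Nle: "van V z N k h \<Longrightarrow> N' \<le> N \<Longrightarrow> van V z N' k h"
proof -
  assume a: "van V z N k h" "N' \<le> N"
  have "van V z (N - (N - N')) k h" by (rule van_Nsub[OF a(1)])
  moreover have "N - (N - N') = N'" using a(2) by simp
  ultimately show ?thesis by metis
qed

lemma van_kle: "van V z N k h \<Longrightarrow> k' \<le> k \<Longrightarrow> van V z N k' h"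
proof (induction rule: van.induct)
  case (base k h) then show ?case using van.base[OF Ck_le[OF base(1) base(2)]] by simp
next
  case (fac k u N h) then show ?case using van.fac[OF Ck_le[OF fac(1) fac.prems] fac(2) fac.IH[OF fac.prems]] by simp
next
  case (mul k v N h) then show ?case using van.mul[OF Ck_le[OF mul(1) mul.prems] mul.IH[OF mul.prems]] by simp
next
  case (add N k h1 h2) then show ?case using van.add[OF add.IH(1)[OF add.prems] add.IH(2)[OF add.prems]] by simp
next
  case (cong N k h h') then show ?case using van.cong[OF cong.IH[OF cong.prems] cong(2)] by simp
qed

lemma van_mult: "van V z N1 k h1 \<Longrightarrow> van V z N2 k h2 \<Longrightarrow> van V z (N1 + N2) k (\<lambda>w. h1 w * h2 w)"
proof (induction rule: van.induct)
  case (base k h) then show ?case by (simp add: van.mul)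
next
  case (fac k u N h)
  then have "van V z (Suc (N + N2)) k (\<lambda>w. u w * (h w * h2 w))" by (simp add: van.fac)
  then have "van V z (Suc N + N2) k (\<lambda>w. u w * (h w * h2 w))" by simp
  then show ?case by (rule van.cong) (simp add: mult.assoc)
next
  case (mul k v N h)
  then have "van V z (N + N2) k (\<lambda>w. v w * (h w * h2 w))" by (simp add: van.mul)
  then show ?case by (rule van.cong) (simp add: mult.assoc)
next
  case (add N k h1 h1')
  then have "van V z (N + N2) k (\<lambda>w. h1 w * h2 w + h1' w * h2 w)" by (simp add: van.add)
  then show ?case by (rule van.cong) (simp add: distrib_right)
next
  case (cong N k h h')
  then show ?case by (auto intro: van.cong)
qed

lemma van_partial: "van V z N (Suc k) h \<Longrightarrow> van V z (N - 1) k (partial i h)"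
proof (induction N "Suc k" h arbitrary: k rule: van.induct)
  case (base h) then show ?case by (simp add: van.base)
next
  case (fac u N h)
  have hC: "Ck (Suc k) V h" using fac van_Ck by blast
  have e: "partial i u w * h w + u w * partial i h w = partial i (\<lambda>w. u w * h w) w" if "w \<in> V" for w
    using partial_mult[of u w i h] fac(1) hC that by simp
  have t1: "van V z N k (\<lambda>w. partial i u w * h w)"
    using fac van_kle[of N "Suc k" h k] by (auto intro!: van.mul)
  have t2: "van V z N k (\<lambda>w. u w * partial i h w)"
  proof (cases N)
    case 0 then show ?thesis using fac Ck_down by (auto intro!: van.mul)
  next
    case (Suc N') then show ?thesis using fac Ck_down by (auto intro!: van.fac)
  qed
  show ?case using van.add[OF t1 t2] e by (auto intro: van.cong)
next
  case (mul v N h)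
  have hC: "Ck (Suc k) V h" using mul van_Ck by blast
  have e: "partial i v w * h w + v w * partial i h w = partial i (\<lambda>w. v w * h w) w" if "w \<in> V" for w
    using partial_mult[of v w i h] mul(1) hC that by simp
  have t1: "van V z (N - 1) k (\<lambda>w. partial i v w * h w)"
    using mul van_kle[of N "Suc k" h k] van_Ndown by (auto intro!: van.mul)
  have t2: "van V z (N - 1) k (\<lambda>w. v w * partial i h w)"
    using mul Ck_down by (auto intro!: van.mul)
  show ?case using van.add[OF t1 t2] e by (auto intro: van.cong)
next
  case (add N h1 h2)
  have C1: "Ck (Suc k) V h1" "Ck (Suc k) V h2" using add(1,3) van_Ck by blast+
  have e: "partial i h1 w + partial i h2 w = partial i (\<lambda>w. h1 w + h2 w) w" if "w \<in> V" for w
    using partial_add[of h1 w i h2] C1 that by simp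
  show ?case using van.add[OF add(2) add(4)] e by (auto intro: van.cong)
next
  case (cong N h h')
  show ?case using cong(2) partial_cong[OF oV _ cong(3)] by (auto intro: van.cong)
qed

lemma van_pi: "van V z N k h \<Longrightarrow> length js \<le> k \<Longrightarrow> van V z (N - length js) (k - length js) (partial_iter js h)"
proof (induction js)
  case Nil then show ?case by simp
next
  case (Cons j js)
  then have "van V z (N - length js) (Suc (k - Suc (length js))) (partial_iter js h)"
    by (simp add: Suc_diff_Suc)
  then have "van V z (N - length js - 1) (k - Suc (length js)) (partial j (partial_iter js h))"
    by (rule van_partial)
  then show ?case by simp
qed

lemma van_pi_zero: "van V z N k h \<Longrightarrow> length js \<le> k \<Longrightarrow> length js < N \<Longrightarrow> partial_iter js h z = 0"
proof -
  assume a: "van V z N k h" "length js \<le> k" "length js < N"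
  have "van V z (N - length js) (k - length js) (partial_iter js h)" by (rule van_pi[OF a(1,2)])
  then show ?thesis using van_zero a(3) by simp
qed

lemma van_one: assumes "Ck k V u" "u z = 0" shows "van V z 1 k u"
proof -
  have "van V z 0 k (\<lambda>_. 1)" by (rule van.base[OF Ck_const])
  then have "van V z (Suc 0) k (\<lambda>w. u w * 1)" by (rule van.fac[OF assms])
  then have "van V z 1 k (\<lambda>w. u w * 1)" by simp
  then show ?thesis by (rule van.cong) simp
qed

lemma van_power: assumes "Ck k V u" "u z = 0" shows "van V z e k (\<lambda>w. u w ^ e)"
proof (induction e)
  case 0 then show ?case using van.base[OF Ck_const[of k V 1]] by simp
next
  case (Suc e) then show ?case using van.fac[OF assms Suc] by simp
qed

lemma van_prod: assumes "finite I" "\<And>i. i \<in> I \<Longrightarrow> van V z (N i) k (h i)"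
  shows "van V z (\<Sum>i\<in>I. N i) k (\<lambda>w. \<Prod>i\<in>I. h i w)"
  using assms
proof (induction I rule: finite_induct)
  case empty then show ?case using van.base[OF Ck_const[of k V 1]] by simp
next
  case (insert i I)
  have "van V z (N i + (\<Sum>i\<in>I. N i)) k (\<lambda>w. h i w * (\<Prod>i\<in>I. h i w))"
    using van_mult insert by simp
  then show ?case using insert by simp
qed

end


lemma MI_sub: "MI p \<subseteq> Pi\<^sub>E UNIV (\<lambda>i. {..p})"
proof
  fix \<alpha> :: "'n::finite \<Rightarrow> nat" assume "\<alpha> \<in> MI p"
  then have "mi_abs \<alpha> \<le> p" by (simp add: MI_def)
  then have "\<alpha> i \<le> p" for i
    unfolding mi_abs_def using member_le_sum[of i UNIV \<alpha>] by simp
  then show "\<alpha> \<in> Pi\<^sub>E UNIV (\<lambda>i. {..p})" by (auto simp: PiE_def Pi_def extensional_def)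
qed

lemma finite_MI: "finite (MI p :: ('n::finite \<Rightarrow> nat) set)"
  by (rule finite_subset[OF MI_sub]) (intro finite_PiE; simp)

lemma card_MI: "p + 1 \<le> card (MI p :: ('n::finite \<Rightarrow> nat) set)"
proof -
  obtain i0 :: 'n where True by simp
  define g where "g k = (\<lambda>i. if i = i0 then k else (0::nat))" for k
  have inj: "inj_on g {..p}" unfolding g_def inj_on_def by (metis)
  have ab: "mi_abs (g k) = k" for k
    unfolding mi_abs_def g_def by (simp add: sum.delta)
  have "g ` {..p} \<subseteq> MI p" using ab by (auto simp: MI_def)
  then have "card (g ` {..p}) \<le> card (MI p :: ('n \<Rightarrow> nat) set)" using finite_MI card_mono by blast
  then show ?thesis using card_image[OF inj] by simp
qed

lemma jet_eq: "jet p \<xi> \<alpha> b = (\<Sum>\<beta>\<in>MI p. shifted_mono_coeff \<alpha> b \<beta> * \<xi> \<beta>)"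
  by (simp add: jet_def dual_ev_def)

lemma jet_scale: "jet p (\<lambda>\<beta>. t * \<xi> \<beta>) \<alpha> b = t * jet p \<xi> \<alpha> b"
  by (simp add: jet_eq sum_distrib_left algebra_simps)

lemma jet_zero: "jet p (\<lambda>\<beta>. 0) \<alpha> b = 0"
  by (simp add: jet_eq)

lemma smc_sum:
  fixes \<alpha> :: "'n::finite \<Rightarrow> nat"
  assumes "mi_abs \<alpha> \<le> p"
  shows "(\<Sum>\<beta>\<in>MI p. shifted_mono_coeff \<alpha> b \<beta> * mono \<beta> y) = (\<Prod>i\<in>UNIV. (y$i - b$i)^(\<alpha> i)) / mi_fact \<alpha>"
proof -
  define A where "A = Pi\<^sub>E UNIV (\<lambda>i. {..\<alpha> i})"
  have A_iff: "\<beta> \<in> A \<longleftrightarrow> (\<forall>i. \<beta> i \<le> \<alpha> i)" for \<beta>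
    by (auto simp: A_def PiE_def Pi_def extensional_def)
  have finA: "finite A" unfolding A_def by (intro finite_PiE) auto
  have sub: "A \<subseteq> MI p"
  proof
    fix \<beta> assume "\<beta> \<in> A"
    then have "mi_abs \<beta> \<le> mi_abs \<alpha>" unfolding mi_abs_def using A_iff by (intro sum_mono) auto
    then show "\<beta> \<in> MI p" using assms by (simp add: MI_def)
  qed
  have "(\<Sum>\<beta>\<in>MI p. shifted_mono_coeff \<alpha> b \<beta> * mono \<beta> y) = (\<Sum>\<beta>\<in>A. shifted_mono_coeff \<alpha> b \<beta> * mono \<beta> y)"
    by (rule sum.mono_neutral_right[OF finite_MI sub]) (auto simp: shifted_mono_coeff_def A_iff)
  also have "\<dots> = (\<Sum>\<beta>\<in>A. (\<Prod>i\<in>UNIV. real (\<alpha> i choose \<beta> i) * y$i ^ \<beta> i * (- (b $ i)) ^ (\<alpha> i - \<beta> i)) / mi_fact \<alpha>)"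
    by (rule sum.cong) (auto simp: shifted_mono_coeff_def A_iff mono_def prod.distrib[symmetric] ac_simps)
  also have "\<dots> = (\<Sum>\<beta>\<in>A. (\<Prod>i\<in>UNIV. real (\<alpha> i choose \<beta> i) * y$i ^ \<beta> i * (- (b $ i)) ^ (\<alpha> i - \<beta> i))) / mi_fact \<alpha>"
    by (simp add: sum_divide_distrib)
  also have "(\<Sum>\<beta>\<in>A. (\<Prod>i\<in>UNIV. real (\<alpha> i choose \<beta> i) * y$i ^ \<beta> i * (- (b $ i)) ^ (\<alpha> i - \<beta> i)))
      = (\<Prod>i\<in>UNIV. \<Sum>k\<le>\<alpha> i. real (\<alpha> i choose k) * y$i ^ k * (- (b $ i)) ^ (\<alpha> i - k))"
    unfolding A_def by (rule prod_sum_PiE[symmetric]) auto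
  also have "\<dots> = (\<Prod>i\<in>UNIV. (y$i - b$i)^(\<alpha> i))"
    by (rule prod.cong[OF refl]) (simp add: binomial_ring[symmetric])
  finally show ?thesis .
qed

definition Psi :: "nat \<Rightarrow> (real^'m::finite \<Rightarrow> real^'n::finite) \<Rightarrow> 'm list \<Rightarrow> real^'m \<Rightarrow> ('n \<Rightarrow> nat) \<Rightarrow> real" where
  "Psi p \<phi> js x = (\<lambda>\<beta>. if \<beta> \<in> MI p then partial_iter js (\<lambda>z. mono \<beta> (\<phi> z)) x else 0)"

lemma Ck_comp_mono:
  assumes "open V" "Ck_map k V \<phi>"
  shows "Ck k V (\<lambda>z. mono \<beta> (\<phi> z))"
  unfolding mono_def
  by (rule Ck_prod[OF assms(1)]) (use assms(2) in \<open>auto simp: Ck_map_def intro: Ck_power[OF assms(1)]\<close>)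

lemma Ck_map_cont: "Ck_map k V \<phi> \<Longrightarrow> continuous_on V \<phi>"
proof -
  assume "Ck_map k V \<phi>"
  then have "continuous_on V (\<lambda>x. \<phi> x $ i)" for i using Ck_cont by (auto simp: Ck_map_def)
  then have "continuous_on V (\<lambda>x. \<chi> i. \<phi> x $ i)" by (intro continuous_on_vec_lambda)
  then show ?thesis by simp
qed

lemma mi_fact_pos: "mi_fact \<alpha> > 0"
  unfolding mi_fact_def by (intro prod_pos) simp

lemma smc_cont: "continuous_on V \<phi> \<Longrightarrow> continuous_on V (\<lambda>z. shifted_mono_coeff \<alpha> (\<phi> z) \<beta>)"
proof (cases "\<forall>i. \<beta> i \<le> \<alpha> i")
  case True
  assume c: "continuous_on V \<phi>"
  have "continuous_on V (\<lambda>z. (\<Prod>i\<in>UNIV. real (\<alpha> i choose \<beta> i) * (- (\<phi> z $ i)) ^ (\<alpha> i - \<beta> i)) / mi_fact \<alpha>)"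
    using mi_fact_pos[of \<alpha>] c by (intro continuous_intros) auto
  then show ?thesis using True unfolding shifted_mono_coeff_def by simp
next
  case False
  have e: "(\<lambda>z. shifted_mono_coeff \<alpha> (\<phi> z) \<beta>) = (\<lambda>z. 0)" unfolding shifted_mono_coeff_def if_not_P[OF False] ..
  show ?thesis unfolding e by simp
qed

context
  fixes V :: "(real^'m::finite) set" and \<phi> :: "real^'m \<Rightarrow> real^'n::finite" and p :: nat
  assumes oV: "open V" and C\<phi>: "Ck_map p V \<phi>"
begin

lemma Psi_cont: "length js \<le> p \<Longrightarrow> continuous_on V (\<lambda>z. Psi p \<phi> js z \<beta>)"
  unfolding Psi_def
  by (cases "\<beta> \<in> MI p") (auto intro: Ck_pi_cont[OF Ck_comp_mono[OF oV C\<phi>]])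

lemma jet_Psi_cont: "length js \<le> p \<Longrightarrow> continuous_on V (\<lambda>z. jet p (Psi p \<phi> js z) \<alpha> (\<phi> z))"
  unfolding jet_eq
  by (intro continuous_on_sum continuous_on_mult smc_cont Ck_map_cont[OF C\<phi>] Psi_cont) auto

lemma jet_Psi_zero:
  assumes "z \<in> V" "mi_abs \<alpha> = p" "length js < p"
  shows "jet p (Psi p \<phi> js z) \<alpha> (\<phi> z) = 0"
proof -
  have CM: "\<And>\<beta>. \<beta> \<in> MI p \<Longrightarrow> Ck p V (\<lambda>w. mono \<beta> (\<phi> w))" using Ck_comp_mono[OF oV C\<phi>] by blast
  have "jet p (Psi p \<phi> js z) \<alpha> (\<phi> z) = (\<Sum>\<beta>\<in>MI p. shifted_mono_coeff \<alpha> (\<phi> z) \<beta> * partial_iter js (\<lambda>w. mono \<beta> (\<phi> w)) z)"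
    unfolding jet_eq Psi_def by (rule sum.cong) auto
  also have "\<dots> = partial_iter js (\<lambda>w. \<Sum>\<beta>\<in>MI p. shifted_mono_coeff \<alpha> (\<phi> z) \<beta> * mono \<beta> (\<phi> w)) z"
    by (rule pi_sum[OF oV finite_MI CM _ assms(1), symmetric]) (use assms in auto)
  also have "(\<lambda>w. \<Sum>\<beta>\<in>MI p. shifted_mono_coeff \<alpha> (\<phi> z) \<beta> * mono \<beta> (\<phi> w))
      = (\<lambda>w. (1 / mi_fact \<alpha>) * (\<Prod>i\<in>UNIV. (\<phi> w $ i - \<phi> z $ i) ^ \<alpha> i))"
    using smc_sum[of \<alpha> p] assms(2) by simp
  also have "partial_iter js \<dots> z = 0"
  proof (rule van_pi_zero[OF oV assms(1)])
    have u: "Ck p V (\<lambda>w. \<phi> w $ i - \<phi> z $ i)" for i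
      using C\<phi> by (auto simp: Ck_map_def intro!: Ck_diff[OF oV] Ck_const)
    have "van V z (\<Sum>i\<in>UNIV. \<alpha> i) p (\<lambda>w. \<Prod>i\<in>UNIV. (\<phi> w $ i - \<phi> z $ i) ^ \<alpha> i)"
      by (rule van_prod[OF oV assms(1)]) (auto intro!: van_power[OF oV assms(1) u])
    then have "van V z (mi_abs \<alpha>) p (\<lambda>w. (1 / mi_fact \<alpha>) * (\<Prod>i\<in>UNIV. (\<phi> w $ i - \<phi> z $ i) ^ \<alpha> i))"
      unfolding mi_abs_def by (rule van.mul[OF Ck_const])
    then show "van V z p p (\<lambda>w. (1 / mi_fact \<alpha>) * (\<Prod>i\<in>UNIV. (\<phi> w $ i - \<phi> z $ i) ^ \<alpha> i))"
      using assms(2) by simp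
  qed (use assms in auto)
  finally show ?thesis .
qed

end


lemma tendsto_fun_iff: "((f::'b \<Rightarrow> 'a \<Rightarrow> real) \<longlongrightarrow> l) F \<longleftrightarrow> (\<forall>i. ((\<lambda>c. f c i) \<longlongrightarrow> l i) F)"
  using limitin_componentwise[of "\<lambda>i. euclidean" UNIV f l F] by (simp add: euclidean_product_topology)

definition Lk :: "nat \<Rightarrow> (real^'n::finite) set \<Rightarrow> (real^'n \<Rightarrow> real) \<Rightarrow> nat \<Rightarrow> ((real^'n) \<times> (('n \<Rightarrow> nat) \<Rightarrow> real) \<times> real) set" where
  "Lk p X f k = (rhoPhi p X ^^ k) (Phi0 p X f)"

lemma Lk_Suc: "Lk p X f (Suc k) = rhoPhi p X (Lk p X f k)"
  by (simp add: Lk_def)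

lemma lin_span2_lin:
  assumes "v1 \<in> lin_span2 S" "v2 \<in> lin_span2 S"
  shows "((\<lambda>x. r1 * fst v1 x + r2 * fst v2 x), r1 * snd v1 + r2 * snd v2) \<in> lin_span2 S"
proof -
  obtain F1 c1 where 1: "finite F1" "F1 \<subseteq> S" "v1 = ((\<lambda>x. \<Sum>u\<in>F1. c1 u * fst u x), (\<Sum>u\<in>F1. c1 u * snd u))"
    using assms(1) unfolding lin_span2_def by blast
  obtain F2 c2 where 2: "finite F2" "F2 \<subseteq> S" "v2 = ((\<lambda>x. \<Sum>u\<in>F2. c2 u * fst u x), (\<Sum>u\<in>F2. c2 u * snd u))"
    using assms(2) unfolding lin_span2_def by blast
  define F where "F = F1 \<union> F2"
  define c where "c u = r1 * (if u \<in> F1 then c1 u else 0) + r2 * (if u \<in> F2 then c2 u else 0)" for u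
  have fin: "finite F" using 1 2 F_def by simp
  have s1: "(\<Sum>u\<in>F. (if u \<in> F1 then c1 u else 0) * g u) = (\<Sum>u\<in>F1. c1 u * g u)" for g :: "_ \<Rightarrow> real"
  proof -
    have "(\<Sum>u\<in>F. (if u \<in> F1 then c1 u else 0) * g u) = (\<Sum>u\<in>F1. (if u \<in> F1 then c1 u else 0) * g u)"
      by (rule sum.mono_neutral_right[OF fin]) (auto simp: F_def)
    then show ?thesis by simp
  qed
  have s2: "(\<Sum>u\<in>F. (if u \<in> F2 then c2 u else 0) * g u) = (\<Sum>u\<in>F2. c2 u * g u)" for g :: "_ \<Rightarrow> real"
  proof -
    have "(\<Sum>u\<in>F. (if u \<in> F2 then c2 u else 0) * g u) = (\<Sum>u\<in>F2. (if u \<in> F2 then c2 u else 0) * g u)"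
      by (rule sum.mono_neutral_right[OF fin]) (auto simp: F_def)
    then show ?thesis by simp
  qed
  have sc: "(\<Sum>u\<in>F. c u * g u) = r1 * (\<Sum>u\<in>F1. c1 u * g u) + r2 * (\<Sum>u\<in>F2. c2 u * g u)" for g :: "_ \<Rightarrow> real"
  proof -
    have "(\<Sum>u\<in>F. c u * g u) = r1 * (\<Sum>u\<in>F. (if u \<in> F1 then c1 u else 0) * g u) + r2 * (\<Sum>u\<in>F. (if u \<in> F2 then c2 u else 0) * g u)"
      unfolding c_def by (simp add: sum.distrib sum_distrib_left algebra_simps)
    then show ?thesis using s1 s2 by simp
  qed
  have "((\<lambda>x. r1 * fst v1 x + r2 * fst v2 x), r1 * snd v1 + r2 * snd v2) = ((\<lambda>x. \<Sum>u\<in>F. c u * fst u x), (\<Sum>u\<in>F. c u * snd u))"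
    using 1(3) 2(3) sc by simp
  moreover have "F \<subseteq> S" using 1 2 F_def by simp
  ultimately show ?thesis unfolding lin_span2_def using fin by blast
qed

lemma lin_span2_single: "v \<in> S \<Longrightarrow> v \<in> lin_span2 S"
  unfolding lin_span2_def by (rule CollectI, rule exI[of _ "{v}"], rule exI[of _ "\<lambda>_. 1"]) simp

lemma lin_span2_zero: "((\<lambda>x. 0), 0) \<in> lin_span2 S"
  unfolding lin_span2_def by (rule CollectI, rule exI[of _ "{}"]) simp

context
  fixes p :: nat and X :: "(real^'n::finite) set" and f :: "real^'n \<Rightarrow> real"
begin

lemma Lk_X: "(a, \<xi>, l) \<in> Lk p X f k \<Longrightarrow> a \<in> X"
  by (cases k) (auto simp: Lk_def Phi0_def rhoPhi_def)

lemma Lk_zero: "a \<in> X \<Longrightarrow> (a, \<lambda>_. 0, 0) \<in> Lk p X f k"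
proof (cases k)
  case 0
  assume a: "a \<in> X"
  have "(a, \<lambda>_. 0, 0) \<in> Phi0 p X f" unfolding Phi0_def using a by (auto intro!: exI[of _ 0])
  then show ?thesis using 0 by (simp add: Lk_def)
next
  case (Suc k')
  assume a: "a \<in> X"
  then show ?thesis using Suc lin_span2_zero unfolding Lk_def rhoPhi_def by simp
qed

lemma Lk_lin:
  assumes "(a, \<xi>1, l1) \<in> Lk p X f k" "(a, \<xi>2, l2) \<in> Lk p X f k"
  shows "(a, \<lambda>\<beta>. r1 * \<xi>1 \<beta> + r2 * \<xi>2 \<beta>, r1 * l1 + r2 * l2) \<in> Lk p X f k"
proof (cases k)
  case 0
  obtain m1 where m1: "\<xi>1 = (\<lambda>\<alpha>. m1 * delta p a \<alpha>)" "l1 = m1 * f a" "a \<in> X"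
    using assms(1) 0 unfolding Lk_def Phi0_def by auto
  obtain m2 where m2: "\<xi>2 = (\<lambda>\<alpha>. m2 * delta p a \<alpha>)" "l2 = m2 * f a"
    using assms(2) 0 unfolding Lk_def Phi0_def by auto
  have "(\<lambda>\<beta>. r1 * \<xi>1 \<beta> + r2 * \<xi>2 \<beta>) = (\<lambda>\<alpha>. (r1 * m1 + r2 * m2) * delta p a \<alpha>)
      \<and> r1 * l1 + r2 * l2 = (r1 * m1 + r2 * m2) * f a"
    using m1 m2 by (auto simp: algebra_simps)
  then have "(a, \<lambda>\<beta>. r1 * \<xi>1 \<beta> + r2 * \<xi>2 \<beta>, r1 * l1 + r2 * l2) \<in> Phi0 p X f"
    unfolding Phi0_def using m1(3) by blast
  then show ?thesis using 0 by (simp add: Lk_def)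
next
  case (Suc k')
  have "(a, \<xi>1, l1) \<in> rhoPhi p X (Lk p X f k')" "(a, \<xi>2, l2) \<in> rhoPhi p X (Lk p X f k')"
    using assms Suc by (simp_all add: Lk_Suc)
  then have "a \<in> X" "(\<xi>1, l1) \<in> lin_span2 {(\<eta>, \<mu>). (a, \<eta>, \<mu>) \<in> primePhi p X (Lk p X f k')}"
    "(\<xi>2, l2) \<in> lin_span2 {(\<eta>, \<mu>). (a, \<eta>, \<mu>) \<in> primePhi p X (Lk p X f k')}"
    unfolding rhoPhi_def by auto
  then have "(\<lambda>x. r1 * \<xi>1 x + r2 * \<xi>2 x, r1 * l1 + r2 * l2) \<in> lin_span2 {(\<eta>, \<mu>). (a, \<eta>, \<mu>) \<in> primePhi p X (Lk p X f k')}"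
    using lin_span2_lin[of "(\<xi>1, l1)" _ "(\<xi>2, l2)" r1 r2] by simp
  then show ?thesis using Suc \<open>a \<in> X\<close> by (simp add: Lk_Suc rhoPhi_def)
qed

lemma Lk_scale:
  assumes "(a, \<xi>, l) \<in> Lk p X f k"
  shows "(a, \<lambda>\<beta>. t * \<xi> \<beta>, t * l) \<in> Lk p X f k"
  using Lk_lin[OF assms assms, of t 0] by simp

lemma Lk_mono: "(a, \<xi>, l) \<in> Lk p X f k \<Longrightarrow> (a, \<xi>, l) \<in> Lk p X f (Suc k)"
proof -
  assume m: "(a, \<xi>, l) \<in> Lk p X f k"
  have aX: "a \<in> X" using Lk_X[OF m] .
  have "\<exists>\<xi>' l' \<eta> \<mu>. (a,\<xi>',l') \<in> Lk p X f k \<and> (a,\<eta>,\<mu>) \<in> Lk p X f k \<and> \<xi> = (\<lambda>\<alpha>. \<xi>' \<alpha> + \<eta> \<alpha>) \<and> l = l' + \<mu>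
     \<and> (\<forall>\<alpha>\<in>MI p. norm (a - a) ^ (p - mi_abs \<alpha>) * \<bar>jet p \<eta> \<alpha> a\<bar> \<le> 1)"
    by (rule exI[of _ \<xi>], rule exI[of _ l], rule exI[of _ "\<lambda>_. 0"], rule exI[of _ 0])
      (use m Lk_zero[OF aX, of k] in \<open>simp add: jet_zero\<close>)
  then have "(a, a, \<xi>, l) \<in> DeltaPhi p X (Lk p X f k)"
    unfolding DeltaPhi_def using aX by simp
  then have "(a, a, \<xi>, l) \<in> closure (DeltaPhi p X (Lk p X f k))" using closure_subset by blast
  then have "(a, \<xi>, l) \<in> primePhi p X (Lk p X f k)" unfolding primePhi_def using aX by simp
  then have "(\<xi>, l) \<in> {(\<eta>,\<mu>). (a,\<eta>,\<mu>) \<in> primePhi p X (Lk p X f k)}" by simp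
  then have "(\<xi>, l) \<in> lin_span2 {(\<eta>,\<mu>). (a,\<eta>,\<mu>) \<in> primePhi p X (Lk p X f k)}" by (rule lin_span2_single)
  then show ?thesis unfolding Lk_Suc rhoPhi_def using aX by simp
qed

lemma Lk_mono_le: "k \<le> k' \<Longrightarrow> (a, \<xi>, l) \<in> Lk p X f k \<Longrightarrow> (a, \<xi>, l) \<in> Lk p X f k'"
  by (induction k' rule: dec_induct) (auto intro: Lk_mono)

definition KK :: nat where "KK = 2 * (dimP p TYPE('n) + 1)"

lemma tau_zero: "a \<in> X \<Longrightarrow> (a, \<lambda>_. 0) \<in> tau p X"
proof -
  assume a: "a \<in> X"
  have "p + 1 \<le> card (MI p :: ('n \<Rightarrow> nat) set)" by (rule card_MI)
  then have "dimP p TYPE('n) \<ge> 1" unfolding dimP_def by linarith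
  then obtain m where m: "2 * dimP p TYPE('n) = Suc m" by (metis Suc_pred mult_pos_pos pos2 less_le_trans zero_less_one)
  have "(\<lambda>_. 0) \<in> lin_span S" for S :: "(('n \<Rightarrow> nat) \<Rightarrow> real) set"
    unfolding lin_span_def by (rule CollectI, rule exI[of _ "{}"]) simp
  then show ?thesis unfolding tau_def m using a by (simp add: rhoE_def)
qed

lemma Lk_uniq0:
  assumes nf: "nabla_is_function p X f" and "k \<le> KK" and "(a, \<lambda>_. 0, l) \<in> Lk p X f k"
  shows "l = 0"
proof -
  have aX: "a \<in> X" using Lk_X assms(3) by blast
  have 1: "(a, \<lambda>_. 0, l) \<in> nabla p X f" using Lk_mono_le[OF assms(2,3)] by (simp add: Lk_def KK_def nabla_def)
  have 2: "(a, \<lambda>_. 0, 0) \<in> nabla p X f" using Lk_zero[OF aX, of KK] by (simp add: Lk_def KK_def nabla_def)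
  show ?thesis using nf tau_zero[OF aX] 1 2 unfolding nabla_is_function_def by blast
qed

lemma Lk_uniq:
  assumes nf: "nabla_is_function p X f" and "k \<le> KK"
    and "(a, \<xi>, l1) \<in> Lk p X f k" "(a, \<xi>, l2) \<in> Lk p X f k"
  shows "l1 = l2"
proof -
  have "(a, \<lambda>\<beta>. 1 * \<xi> \<beta> + (-1) * \<xi> \<beta>, 1 * l1 + (-1) * l2) \<in> Lk p X f k"
    by (rule Lk_lin[OF assms(3,4)])
  then have z: "(a, \<lambda>_. 0, l1 - l2) \<in> Lk p X f k" by simp
  show ?thesis using Lk_uniq0[OF nf assms(2) z] by simp
qed

end


definition goodseq where
  "goodseq p X f k a \<zeta> as bs \<xi>s ls \<eta>s \<mu>s \<longleftrightarrow>
    (\<forall>j. (as j, \<xi>s j, ls j) \<in> Lk p X f k) \<and> (\<forall>j. (bs j, \<eta>s j, \<mu>s j) \<in> Lk p X f k) \<and>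
    (\<forall>j. \<forall>\<alpha>\<in>MI p. norm (as j - bs j) ^ (p - mi_abs \<alpha>) * \<bar>jet p (\<eta>s j) \<alpha> (bs j)\<bar> \<le> 1) \<and>
    as \<longlonglongrightarrow> a \<and> bs \<longlonglongrightarrow> a \<and> ((\<lambda>j. \<lambda>\<beta>. \<xi>s j \<beta> + \<eta>s j \<beta>) \<longlongrightarrow> \<zeta>) sequentially"

lemma goodseq_sub:
  assumes "goodseq p X f k a \<zeta> as bs \<xi>s ls \<eta>s \<mu>s" "strict_mono s"
  shows "goodseq p X f k a \<zeta> (as \<circ> s) (bs \<circ> s) (\<xi>s \<circ> s) (ls \<circ> s) (\<eta>s \<circ> s) (\<mu>s \<circ> s)"
proof -
  have "((\<lambda>j. \<lambda>\<beta>. \<xi>s j \<beta> + \<eta>s j \<beta>) \<circ> s) \<longlonglongrightarrow> \<zeta>"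
    using assms by (intro LIMSEQ_subseq_LIMSEQ) (auto simp: goodseq_def)
  then show ?thesis using assms by (auto simp: goodseq_def intro: LIMSEQ_subseq_LIMSEQ simp del: comp_apply) (simp_all add: comp_def)
qed

lemma inclos:
  assumes "a \<in> X" "goodseq p X f k a \<zeta> as bs \<xi>s ls \<eta>s \<mu>s"
    and "(\<lambda>j. ls j + \<mu>s j) \<longlonglongrightarrow> \<nu>"
  shows "(a, \<zeta>, \<nu>) \<in> Lk p X f (Suc k)"
proof -
  have g: "\<forall>j. (as j, \<xi>s j, ls j) \<in> Lk p X f k" "\<forall>j. (bs j, \<eta>s j, \<mu>s j) \<in> Lk p X f k"
    "\<forall>j. \<forall>\<alpha>\<in>MI p. norm (as j - bs j) ^ (p - mi_abs \<alpha>) * \<bar>jet p (\<eta>s j) \<alpha> (bs j)\<bar> \<le> 1"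
    "as \<longlonglongrightarrow> a" "bs \<longlonglongrightarrow> a" "((\<lambda>j. \<lambda>\<beta>. \<xi>s j \<beta> + \<eta>s j \<beta>) \<longlongrightarrow> \<zeta>) sequentially"
    using assms(2) unfolding goodseq_def by auto
  have mem: "(as j, bs j, \<lambda>\<beta>. \<xi>s j \<beta> + \<eta>s j \<beta>, ls j + \<mu>s j) \<in> DeltaPhi p X (Lk p X f k)" for j
  proof -
    have "as j \<in> X" "bs j \<in> X" using g(1,2) Lk_X by blast+
    then show ?thesis unfolding DeltaPhi_def using g(1,2,3) by blast
  qed
  have lim: "(\<lambda>j. (as j, bs j, \<lambda>\<beta>. \<xi>s j \<beta> + \<eta>s j \<beta>, ls j + \<mu>s j)) \<longlonglongrightarrow> (a, a, \<zeta>, \<nu>)"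
    using g(4,5,6) assms(3) by (intro tendsto_Pair)
  have "(a, a, \<zeta>, \<nu>) \<in> closure (DeltaPhi p X (Lk p X f k))"
    unfolding closure_sequential
    by (rule exI[of _ "\<lambda>j. (as j, bs j, \<lambda>\<beta>. \<xi>s j \<beta> + \<eta>s j \<beta>, ls j + \<mu>s j)"]) (use mem lim in simp)
  then have "(a, \<zeta>, \<nu>) \<in> primePhi p X (Lk p X f k)" unfolding primePhi_def using assms(1) by simp
  then have "(\<zeta>, \<nu>) \<in> {(\<eta>,\<mu>). (a,\<eta>,\<mu>) \<in> primePhi p X (Lk p X f k)}" by simp
  then have "(\<zeta>, \<nu>) \<in> lin_span2 {(\<eta>,\<mu>). (a,\<eta>,\<mu>) \<in> primePhi p X (Lk p X f k)}" by (rule lin_span2_single)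
  then show ?thesis unfolding Lk_Suc rhoPhi_def using assms(1) by simp
qed

context
  fixes p :: nat and X :: "(real^'n::finite) set" and f :: "real^'n \<Rightarrow> real"
  assumes nf: "nabla_is_function p X f"
begin

lemma sublim:
  assumes kK: "Suc k \<le> KK TYPE('n) p" and aX: "a \<in> X" and gs: "goodseq p X f k a \<zeta> as bs \<xi>s ls \<eta>s \<mu>s"
  shows "\<exists>r L. strict_mono r \<and> ((\<lambda>j. ls (r j) + \<mu>s (r j)) \<longlonglongrightarrow> L) \<and> (a, \<zeta>, L) \<in> Lk p X f (Suc k)"
proof -
  have g: "\<forall>j. (as j, \<xi>s j, ls j) \<in> Lk p X f k" "\<forall>j. (bs j, \<eta>s j, \<mu>s j) \<in> Lk p X f k"
    "\<forall>j. \<forall>\<alpha>\<in>MI p. norm (as j - bs j) ^ (p - mi_abs \<alpha>) * \<bar>jet p (\<eta>s j) \<alpha> (bs j)\<bar> \<le> 1"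
    "as \<longlonglongrightarrow> a" "bs \<longlonglongrightarrow> a" "((\<lambda>j. \<lambda>\<beta>. \<xi>s j \<beta> + \<eta>s j \<beta>) \<longlongrightarrow> \<zeta>) sequentially"
    using gs unfolding goodseq_def by auto
  define \<nu> where "\<nu> j = ls j + \<mu>s j" for j
  define t where "t j = 1 / max 1 \<bar>\<nu> j\<bar>" for j
  have tpos: "0 < t j" "t j \<le> 1" for j unfolding t_def by auto
  have tnu: "\<bar>t j * \<nu> j\<bar> \<le> 1" for j
  proof -
    have "\<bar>t j * \<nu> j\<bar> = \<bar>\<nu> j\<bar> / max 1 \<bar>\<nu> j\<bar>" unfolding t_def by (simp add: abs_mult)
    also have "\<dots> \<le> 1" by (simp add: divide_le_eq_1 less_max_iff_disj)
    finally show ?thesis .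
  qed
  have bnd: "bounded (range (\<lambda>j. (t j, t j * \<nu> j)))"
    unfolding bounded_iff
  proof (intro exI[of _ 2] ballI)
    fix x assume "x \<in> range (\<lambda>j. (t j, t j * \<nu> j))"
    then obtain j where x: "x = (t j, t j * \<nu> j)" by blast
    have "norm x \<le> norm (t j) + norm (t j * \<nu> j)" unfolding x by (rule norm_Pair_le)
    also have "\<dots> \<le> 2" using tpos[of j] tnu[of j] by simp
    finally show "norm x \<le> 2" .
  qed
  obtain l r where r: "strict_mono r" "((\<lambda>j. (t j, t j * \<nu> j)) \<circ> r) \<longlonglongrightarrow> l"
    using bounded_imp_convergent_subsequence[OF bnd] by blast
  define t0 c0 where "t0 = fst l" and "c0 = snd l"
  have tl: "(\<lambda>j. t (r j)) \<longlonglongrightarrow> t0" using tendsto_fst[OF r(2)] unfolding t0_def by (simp add: comp_def)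
  have cl: "(\<lambda>j. t (r j) * \<nu> (r j)) \<longlonglongrightarrow> c0" using tendsto_snd[OF r(2)] unfolding c0_def by (simp add: comp_def)
  have t0nn: "0 \<le> t0" by (rule LIMSEQ_le_const[OF tl]) (use tpos in \<open>auto intro: less_imp_le\<close>)
  have gs2: "goodseq p X f k a (\<lambda>\<beta>. t0 * \<zeta> \<beta>) (as \<circ> r) (bs \<circ> r) (\<lambda>j \<beta>. t (r j) * \<xi>s (r j) \<beta>)
      (\<lambda>j. t (r j) * ls (r j)) (\<lambda>j \<beta>. t (r j) * \<eta>s (r j) \<beta>) (\<lambda>j. t (r j) * \<mu>s (r j))"
    unfolding goodseq_def
  proof (intro conjI allI ballI)
    fix j
    show "((as \<circ> r) j, \<lambda>\<beta>. t (r j) * \<xi>s (r j) \<beta>, t (r j) * ls (r j)) \<in> Lk p X f k"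
      using Lk_scale[of "as (r j)" "\<xi>s (r j)" "ls (r j)" p X f k "t (r j)"] g(1) by simp
    show "((bs \<circ> r) j, \<lambda>\<beta>. t (r j) * \<eta>s (r j) \<beta>, t (r j) * \<mu>s (r j)) \<in> Lk p X f k"
      using Lk_scale[of "bs (r j)" "\<eta>s (r j)" "\<mu>s (r j)" p X f k "t (r j)"] g(2) by simp
    fix \<alpha> :: "'n \<Rightarrow> nat" assume \<alpha>: "\<alpha> \<in> MI p"
    have "norm ((as \<circ> r) j - (bs \<circ> r) j) ^ (p - mi_abs \<alpha>) * \<bar>jet p (\<lambda>\<beta>. t (r j) * \<eta>s (r j) \<beta>) \<alpha> ((bs \<circ> r) j)\<bar>
        = t (r j) * (norm (as (r j) - bs (r j)) ^ (p - mi_abs \<alpha>) * \<bar>jet p (\<eta>s (r j)) \<alpha> (bs (r j))\<bar>)"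
      using tpos[of "r j"] by (simp add: jet_scale abs_mult)
    also have "\<dots> \<le> 1 * 1"
      using g(3) \<alpha> tpos[of "r j"] by (intro mult_mono) auto
    finally show "norm ((as \<circ> r) j - (bs \<circ> r) j) ^ (p - mi_abs \<alpha>) * \<bar>jet p (\<lambda>\<beta>. t (r j) * \<eta>s (r j) \<beta>) \<alpha> ((bs \<circ> r) j)\<bar> \<le> 1"
      by simp
  next
    show "(as \<circ> r) \<longlonglongrightarrow> a" by (rule LIMSEQ_subseq_LIMSEQ[OF g(4) r(1)])
    show "(bs \<circ> r) \<longlonglongrightarrow> a" by (rule LIMSEQ_subseq_LIMSEQ[OF g(5) r(1)])
    have z: "((\<lambda>j. \<lambda>\<beta>. \<xi>s j \<beta> + \<eta>s j \<beta>) \<circ> r) \<longlonglongrightarrow> \<zeta>" by (rule LIMSEQ_subseq_LIMSEQ[OF g(6) r(1)])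
    show "(\<lambda>j \<beta>. t (r j) * \<xi>s (r j) \<beta> + t (r j) * \<eta>s (r j) \<beta>) \<longlonglongrightarrow> (\<lambda>\<beta>. t0 * \<zeta> \<beta>)"
      unfolding tendsto_fun_iff
    proof
      fix \<beta>
      have "(\<lambda>j. \<xi>s (r j) \<beta> + \<eta>s (r j) \<beta>) \<longlonglongrightarrow> \<zeta> \<beta>" using z unfolding tendsto_fun_iff by (simp add: comp_def)
      then have "(\<lambda>j. t (r j) * (\<xi>s (r j) \<beta> + \<eta>s (r j) \<beta>)) \<longlonglongrightarrow> t0 * \<zeta> \<beta>" by (intro tendsto_mult tl)
      then show "(\<lambda>j. t (r j) * \<xi>s (r j) \<beta> + t (r j) * \<eta>s (r j) \<beta>) \<longlonglongrightarrow> t0 * \<zeta> \<beta>"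
        by (simp add: distrib_left)
    qed
  qed
  have cl2: "(\<lambda>j. t (r j) * ls (r j) + t (r j) * \<mu>s (r j)) \<longlonglongrightarrow> c0"
    using cl unfolding \<nu>_def by (simp add: distrib_left)
  have mem: "(a, \<lambda>\<beta>. t0 * \<zeta> \<beta>, c0) \<in> Lk p X f (Suc k)" by (rule inclos[OF aX gs2 cl2])
  show ?thesis
  proof (cases "t0 = 0")
    case True
    have "(a, \<lambda>_. 0, c0) \<in> Lk p X f (Suc k)" using mem True by simp
    then have c00: "c0 = 0" using Lk_uniq0[OF nf kK] by blast
    have ev1: "eventually (\<lambda>j. t (r j) < 1) sequentially" using tl True by (intro order_tendstoD(2)) auto
    have ev2: "eventually (\<lambda>j. \<bar>t (r j) * \<nu> (r j)\<bar> < 1) sequentially"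
      using tendsto_rabs[OF cl] c00 by (intro order_tendstoD(2)) auto
    have "eventually (\<lambda>j. False) sequentially"
      using ev1 ev2
    proof eventually_elim
      case (elim j)
      have "max 1 \<bar>\<nu> (r j)\<bar> > 1"
      proof (rule ccontr)
        assume "\<not> 1 < max 1 \<bar>\<nu> (r j)\<bar>"
        then have "max 1 \<bar>\<nu> (r j)\<bar> = 1" by simp
        then show False using elim(1) unfolding t_def by simp
      qed
      then have m: "max 1 \<bar>\<nu> (r j)\<bar> = \<bar>\<nu> (r j)\<bar>" "\<bar>\<nu> (r j)\<bar> > 0" by auto
      have "\<bar>t (r j) * \<nu> (r j)\<bar> = 1" unfolding t_def using m by (simp add: abs_mult)
      then show False using elim(2) by simp
    qed
    then show ?thesis by simp
  next
    case False
    then have tp: "t0 > 0" using t0nn by simp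
    have "(\<lambda>j. (t (r j) * \<nu> (r j)) / t (r j)) \<longlonglongrightarrow> c0 / t0" by (intro tendsto_divide cl tl) (use tp in simp)
    moreover have "(t (r j) * \<nu> (r j)) / t (r j) = ls (r j) + \<mu>s (r j)" for j
      using tpos[of "r j"] unfolding \<nu>_def by simp
    ultimately have lim: "(\<lambda>j. ls (r j) + \<mu>s (r j)) \<longlonglongrightarrow> c0 / t0" by simp
    have "(a, \<lambda>\<beta>. (1 / t0) * (t0 * \<zeta> \<beta>), (1 / t0) * c0) \<in> Lk p X f (Suc k)" by (rule Lk_scale[OF mem])
    moreover have "(\<lambda>\<beta>. (1 / t0) * (t0 * \<zeta> \<beta>)) = \<zeta>" using tp by simp
    ultimately have "(a, \<zeta>, c0 / t0) \<in> Lk p X f (Suc k)" by simp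
    then show ?thesis using lim r(1) by blast
  qed
qed

lemma keylim:
  assumes kK: "Suc k \<le> KK TYPE('n) p" and aX: "a \<in> X" and gs: "goodseq p X f k a \<zeta> as bs \<xi>s ls \<eta>s \<mu>s"
  shows "\<exists>L. ((\<lambda>j. ls j + \<mu>s j) \<longlonglongrightarrow> L) \<and> (a, \<zeta>, L) \<in> Lk p X f (Suc k)"
proof -
  obtain r0 L0 where L0: "(a, \<zeta>, L0) \<in> Lk p X f (Suc k)"
    using sublim[OF kK aX gs] by blast
  have "(\<lambda>j. ls j + \<mu>s j) \<longlonglongrightarrow> L0"
  proof (rule ccontr)
    assume "\<not> (\<lambda>j. ls j + \<mu>s j) \<longlonglongrightarrow> L0"
    then obtain e where e: "e > 0" "\<forall>no. \<exists>n\<ge>no. \<not> norm (ls n + \<mu>s n - L0) < e"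
      unfolding LIMSEQ_iff by blast
    define S where "S = {n. e \<le> \<bar>ls n + \<mu>s n - L0\<bar>}"
    have infS: "infinite S" unfolding infinite_nat_iff_unbounded_le S_def using e(2) by (auto simp: not_less)
    define s where "s = enumerate S"
    have s: "strict_mono s" "\<And>j. s j \<in> S" unfolding s_def using infS strict_mono_enumerate enumerate_in_set by auto
    obtain r1 L1 where r1: "strict_mono r1" "(\<lambda>j. (ls \<circ> s) (r1 j) + (\<mu>s \<circ> s) (r1 j)) \<longlonglongrightarrow> L1"
        "(a, \<zeta>, L1) \<in> Lk p X f (Suc k)"
      using sublim[OF kK aX goodseq_sub[OF gs s(1)]] by blast
    have "L1 = L0" using Lk_uniq[OF nf kK r1(3) L0] .
    then have "eventually (\<lambda>j. \<bar>ls (s (r1 j)) + \<mu>s (s (r1 j)) - L0\<bar> < e) sequentially"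
      using r1(2) e(1) unfolding LIMSEQ_iff eventually_sequentially by (simp add: comp_def)
    moreover have "\<forall>j. e \<le> \<bar>ls (s (r1 j)) + \<mu>s (s (r1 j)) - L0\<bar>" using s(2) unfolding S_def by simp
    ultimately have "eventually (\<lambda>j. False) sequentially" by (auto elim: eventually_mono simp: not_less[symmetric])
    then show False by simp
  qed
  then show ?thesis using L0 by blast
qed

end


lemma deriv_bound_ev:
  assumes "(h has_real_derivative D) (at 0)"
  shows "eventually (\<lambda>t. \<bar>h t - h 0\<bar> \<le> (\<bar>D\<bar> + 1) * \<bar>t\<bar>) (nhds 0)"
proof -
  have "((\<lambda>y. (h y - h 0) / (y - 0)) \<longlongrightarrow> D) (at 0)"
    using assms has_field_derivative_iff by blast
  then have "eventually (\<lambda>y. dist ((h y - h 0) / (y - 0)) D < 1) (at 0)"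
    by (rule tendstoD) simp
  then have "eventually (\<lambda>y. y \<noteq> 0 \<longrightarrow> dist ((h y - h 0) / y) D < 1) (nhds 0)"
    unfolding eventually_at_filter by simp
  then show ?thesis
  proof (rule eventually_mono)
    fix y assume a: "y \<noteq> 0 \<longrightarrow> dist ((h y - h 0) / y) D < 1"
    show "\<bar>h y - h 0\<bar> \<le> (\<bar>D\<bar> + 1) * \<bar>y\<bar>"
    proof (cases "y = 0")
      case True then show ?thesis by simp
    next
      case False
      then have "\<bar>(h y - h 0) / y - D\<bar> < 1" using a by (simp add: dist_real_def)
      then have "\<bar>(h y - h 0) / y\<bar> \<le> \<bar>D\<bar> + 1" by linarith
      then have "\<bar>h y - h 0\<bar> / \<bar>y\<bar> \<le> \<bar>D\<bar> + 1" by (simp add: abs_divide)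
      then show ?thesis using False by (simp add: divide_le_eq)
    qed
  qed
qed

lemma cont_line_ev:
  fixes h :: "'a::real_normed_vector \<Rightarrow> real"
  assumes "continuous_on V h" "open V" "x \<in> V"
  shows "eventually (\<lambda>t::real. \<bar>h (x + t *\<^sub>R v)\<bar> \<le> \<bar>h x\<bar> + 1) (nhds 0)"
proof -
  have "isCont h x" using assms continuous_on_eq_continuous_at by blast
  moreover have "isCont (\<lambda>t::real. x + t *\<^sub>R v) 0" by (intro continuous_intros)
  ultimately have "isCont (\<lambda>t. h (x + t *\<^sub>R v)) 0" using continuous_at_compose[of 0 "\<lambda>t::real. x + t *\<^sub>R v" h]
    by (simp add: o_def)
  then have "((\<lambda>t. h (x + t *\<^sub>R v)) \<longlongrightarrow> h x) (at 0)" unfolding isCont_def by simp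
  then have "eventually (\<lambda>t. dist (h (x + t *\<^sub>R v)) (h x) < 1) (at 0)" by (rule tendstoD) simp
  then have "eventually (\<lambda>t. t \<noteq> 0 \<longrightarrow> dist (h (x + t *\<^sub>R v)) (h x) < 1) (nhds 0)"
    unfolding eventually_at_filter by simp
  then show ?thesis by (rule eventually_mono) (auto simp: dist_real_def)
qed

context
  fixes p :: nat and V :: "(real^'m::finite) set" and \<phi> :: "real^'m \<Rightarrow> real^'n::finite"
    and X :: "(real^'n) set" and f :: "real^'n \<Rightarrow> real"
  assumes oV: "open V" and C\<phi>: "Ck_map p V \<phi>" and \<phi>V: "\<phi> ` V \<subseteq> X" and nf: "nabla_is_function p X f"
begin

lemma KK_ge: "p + 1 \<le> KK TYPE('n) p"
proof -
  have "p + 1 \<le> card (MI p :: ('n \<Rightarrow> nat) set)" by (rule card_MI)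
  then show ?thesis unfolding KK_def dimP_def by simp
qed

lemma contstep:
  assumes lp: "length js \<le> p"
    and IH: "\<forall>y\<in>V. (\<phi> y, Psi p \<phi> js y, partial_iter js (f \<circ> \<phi>) y) \<in> Lk p X f (length js)"
  shows "continuous_on V (partial_iter js (f \<circ> \<phi>))"
  unfolding continuous_on_sequentially
proof (intro allI ballI impI, elim conjE)
  fix ys y assume yV: "y \<in> V" and ysV: "\<forall>n. ys n \<in> V" and ylim: "ys \<longlonglongrightarrow> y"
  define G where "G = partial_iter js (f \<circ> \<phi>)"
  have kK: "Suc (length js) \<le> KK TYPE('n) p" using KK_ge lp by simp
  have aX: "\<phi> y \<in> X" using \<phi>V yV by blast
  have phc: "(\<lambda>j. \<phi> (ys j)) \<longlonglongrightarrow> \<phi> y"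
    using continuous_on_tendsto_compose[OF Ck_map_cont[OF C\<phi>] ylim yV] ysV by (simp add: o_def)
  have gs: "goodseq p X f (length js) (\<phi> y) (Psi p \<phi> js y) (\<lambda>j. \<phi> (ys j)) (\<lambda>j. \<phi> (ys j))
      (\<lambda>j. Psi p \<phi> js (ys j)) (\<lambda>j. G (ys j)) (\<lambda>j \<beta>. 0) (\<lambda>j. 0)"
    unfolding goodseq_def
  proof (intro conjI allI ballI)
    fix j
    show "(\<phi> (ys j), Psi p \<phi> js (ys j), G (ys j)) \<in> Lk p X f (length js)" using IH ysV G_def by simp
    show "(\<phi> (ys j), \<lambda>\<beta>. 0, 0) \<in> Lk p X f (length js)" using Lk_zero \<phi>V ysV by blast
    fix \<alpha> :: "'n \<Rightarrow> nat"
    show "norm (\<phi> (ys j) - \<phi> (ys j)) ^ (p - mi_abs \<alpha>) * \<bar>jet p (\<lambda>\<beta>. 0) \<alpha> (\<phi> (ys j))\<bar> \<le> 1"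
      by (simp add: jet_zero)
  next
    show "(\<lambda>j. \<phi> (ys j)) \<longlonglongrightarrow> \<phi> y" by (rule phc)
    show "(\<lambda>j. \<phi> (ys j)) \<longlonglongrightarrow> \<phi> y" by (rule phc)
    show "(\<lambda>j \<beta>. Psi p \<phi> js (ys j) \<beta> + 0) \<longlonglongrightarrow> Psi p \<phi> js y"
      unfolding tendsto_fun_iff
    proof
      fix \<beta>
      show "(\<lambda>j. Psi p \<phi> js (ys j) \<beta> + 0) \<longlonglongrightarrow> Psi p \<phi> js y \<beta>"
        using continuous_on_tendsto_compose[OF Psi_cont[OF oV C\<phi> lp] ylim yV] ysV by (simp add: o_def)
    qed
  qed
  obtain L where L: "(\<lambda>j. G (ys j) + 0) \<longlonglongrightarrow> L" "(\<phi> y, Psi p \<phi> js y, L) \<in> Lk p X f (Suc (length js))"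
    using keylim[OF nf kK aX gs] by blast
  have "(\<phi> y, Psi p \<phi> js y, G y) \<in> Lk p X f (Suc (length js))" using Lk_mono IH yV G_def by blast
  then have "L = G y" using Lk_uniq[OF nf kK L(2)] by simp
  then show "(partial_iter js (f \<circ> \<phi>) \<circ> ys) \<longlonglongrightarrow> partial_iter js (f \<circ> \<phi>) y"
    using L(1) G_def by (simp add: o_def)
qed

lemma derivstep:
  assumes lp: "length js < p"
    and IH: "\<forall>y\<in>V. (\<phi> y, Psi p \<phi> js y, partial_iter js (f \<circ> \<phi>) y) \<in> Lk p X f (length js)"
    and xV: "x \<in> V"
  shows "\<exists>D. ((\<lambda>t. partial_iter js (f \<circ> \<phi>) (x + t *\<^sub>R axis i 1)) has_real_derivative D) (at 0)
           \<and> (\<phi> x, Psi p \<phi> (i # js) x, D) \<in> Lk p X f (Suc (length js))"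
proof -
  define G where "G = partial_iter js (f \<circ> \<phi>)"
  define e :: "real^'m" where "e = axis i 1"
  define k where "k = length js"
  have kK: "Suc k \<le> KK TYPE('n) p" using KK_ge lp k_def by simp
  have aX: "\<phi> x \<in> X" using \<phi>V xV by blast
  have IH': "\<And>y. y \<in> V \<Longrightarrow> (\<phi> y, Psi p \<phi> js y, G y) \<in> Lk p X f k" using IH G_def k_def by simp
  have pS: "p = Suc (p - 1)" using lp by simp
  have dphi: "\<exists>D. ((\<lambda>t. \<phi> (x + t *\<^sub>R e) $ j) has_real_derivative D) (at 0)" for j
  proof -
    have "Ck (Suc (p - 1)) V (\<lambda>y. \<phi> y $ j)" using C\<phi> pS unfolding Ck_map_def by metis
    then have "(\<lambda>t. \<phi> (x + t *\<^sub>R e) $ j) differentiable (at 0)" using xV unfolding e_def by simp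
    then show ?thesis using real_differentiable_def by blast
  qed
  then obtain D\<phi> where D\<phi>: "\<And>j. ((\<lambda>t. \<phi> (x + t *\<^sub>R e) $ j) has_real_derivative D\<phi> j) (at 0)" by metis
  define M where "M = (\<Sum>j\<in>UNIV. \<bar>D\<phi> j\<bar> + 1)"
  have M0: "M \<ge> 0" unfolding M_def by (intro sum_nonneg) auto
  have ev1: "eventually (\<lambda>t. norm (\<phi> x - \<phi> (x + t *\<^sub>R e)) \<le> M * \<bar>t\<bar>) (nhds 0)"
  proof -
    have "eventually (\<lambda>t. \<forall>j. \<bar>\<phi> (x + t *\<^sub>R e) $ j - \<phi> (x + 0 *\<^sub>R e) $ j\<bar> \<le> (\<bar>D\<phi> j\<bar> + 1) * \<bar>t\<bar>) (nhds 0)"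
      by (intro eventually_all_finite deriv_bound_ev[OF D\<phi>])
    then show ?thesis
    proof (rule eventually_mono)
      fix t assume a: "\<forall>j. \<bar>\<phi> (x + t *\<^sub>R e) $ j - \<phi> (x + 0 *\<^sub>R e) $ j\<bar> \<le> (\<bar>D\<phi> j\<bar> + 1) * \<bar>t\<bar>"
      have "norm (\<phi> x - \<phi> (x + t *\<^sub>R e)) = norm (\<phi> (x + t *\<^sub>R e) - \<phi> x)" by (rule norm_minus_commute)
      also have "\<dots> \<le> (\<Sum>j\<in>UNIV. \<bar>(\<phi> (x + t *\<^sub>R e) - \<phi> x) $ j\<bar>)" by (rule norm_le_l1_cart)
      also have "\<dots> \<le> (\<Sum>j\<in>UNIV. (\<bar>D\<phi> j\<bar> + 1) * \<bar>t\<bar>)" using a by (intro sum_mono) simp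
      also have "\<dots> = M * \<bar>t\<bar>" unfolding M_def by (simp add: sum_distrib_right)
      finally show "norm (\<phi> x - \<phi> (x + t *\<^sub>R e)) \<le> M * \<bar>t\<bar>" .
    qed
  qed
  define J where "J \<alpha> t = jet p (Psi p \<phi> js (x + t *\<^sub>R e)) \<alpha> (\<phi> (x + t *\<^sub>R e))" for \<alpha> t
  define B where "B = (\<Sum>\<alpha>\<in>MI p. \<bar>J \<alpha> 0\<bar> + 1)"
  have B0: "B \<ge> 0" unfolding B_def by (intro sum_nonneg) auto
  have ev2: "eventually (\<lambda>t. \<forall>\<alpha>\<in>MI p. \<bar>J \<alpha> t\<bar> \<le> B) (nhds 0)"
  proof (rule eventually_ball_finite[OF finite_MI], rule ballI)
    fix \<alpha> :: "'n \<Rightarrow> nat" assume \<alpha>: "\<alpha> \<in> MI p"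
    have "eventually (\<lambda>t. \<bar>J \<alpha> t\<bar> \<le> \<bar>J \<alpha> 0\<bar> + 1) (nhds 0)"
      using cont_line_ev[OF jet_Psi_cont[OF oV C\<phi>, of js \<alpha>] oV xV, of e] lp unfolding J_def by simp
    moreover have "\<bar>J \<alpha> 0\<bar> + 1 \<le> B" unfolding B_def using \<alpha> by (intro member_le_sum[OF \<alpha>]) (auto simp: finite_MI)
    ultimately show "eventually (\<lambda>t. \<bar>J \<alpha> t\<bar> \<le> B) (nhds 0)" by (auto elim: eventually_mono)
  qed
  have ev3: "eventually (\<lambda>t. x + t *\<^sub>R e \<in> V) (nhds 0)" by (rule ev_line[OF oV xV])
  have ev4: "eventually (\<lambda>t::real. M * \<bar>t\<bar> \<le> 1) (nhds 0)"
  proof -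
    have "eventually (\<lambda>t::real. dist t 0 < 1 / (M + 1)) (nhds 0)"
      unfolding eventually_nhds_metric using M0 by (intro exI[of _ "1 / (M + 1)"]) (auto intro!: divide_pos_pos)
    then show ?thesis
    proof (rule eventually_mono)
      fix t :: real assume "dist t 0 < 1 / (M + 1)"
      then have "\<bar>t\<bar> * (M + 1) < 1" using M0 by (simp add: dist_real_def less_divide_eq)
      then show "M * \<bar>t\<bar> \<le> 1" by (simp add: algebra_simps)
    qed
  qed
  obtain \<delta> where \<delta>: "\<delta> > 0" "\<And>t. dist t 0 < \<delta> \<Longrightarrow> norm (\<phi> x - \<phi> (x + t *\<^sub>R e)) \<le> M * \<bar>t\<bar>
      \<and> (\<forall>\<alpha>\<in>MI p. \<bar>J \<alpha> t\<bar> \<le> B) \<and> x + t *\<^sub>R e \<in> V \<and> M * \<bar>t\<bar> \<le> 1"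
    using eventually_conj[OF ev1 eventually_conj[OF ev2 eventually_conj[OF ev3 ev4]]]
    unfolding eventually_nhds_metric by blast
  define c where "c = 1 / (M * B + 1)"
  have c0: "c > 0" unfolding c_def using M0 B0 by (simp add: add_nonneg_pos)
  have MB: "M * B \<ge> 0" using M0 B0 by simp
  have cMB: "c * (M * B) \<le> 1" unfolding c_def using MB by (simp add: divide_le_eq)
  have bound: "norm (\<phi> x - \<phi> (x + t *\<^sub>R e)) ^ (p - mi_abs \<alpha>) *
      \<bar>jet p (\<lambda>\<beta>. c / t * Psi p \<phi> js (x + t *\<^sub>R e) \<beta>) \<alpha> (\<phi> (x + t *\<^sub>R e))\<bar> \<le> 1"
    if t: "t \<noteq> 0" "\<bar>t\<bar> < \<delta>" and \<alpha>: "\<alpha> \<in> MI p" for t \<alpha>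
  proof -
    have dt: "norm (\<phi> x - \<phi> (x + t *\<^sub>R e)) \<le> M * \<bar>t\<bar>" "\<bar>J \<alpha> t\<bar> \<le> B" "x + t *\<^sub>R e \<in> V" "M * \<bar>t\<bar> \<le> 1"
      using \<delta>(2)[of t] t \<alpha> by (auto simp: dist_real_def)
    have js: "jet p (\<lambda>\<beta>. c / t * Psi p \<phi> js (x + t *\<^sub>R e) \<beta>) \<alpha> (\<phi> (x + t *\<^sub>R e)) = c / t * J \<alpha> t"
      unfolding J_def by (rule jet_scale)
    have ap: "mi_abs \<alpha> \<le> p" using \<alpha> by (simp add: MI_def)
    show ?thesis
    proof (cases "mi_abs \<alpha> = p")
      case True
      have "J \<alpha> t = 0" unfolding J_def by (rule jet_Psi_zero[OF oV C\<phi> dt(3) True lp])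
      then show ?thesis using js by simp
    next
      case False
      define q where "q = p - mi_abs \<alpha>"
      have q1: "1 \<le> q" using False ap q_def by simp
      define N where "N = norm (\<phi> x - \<phi> (x + t *\<^sub>R e))"
      have "N ^ q \<le> (M * \<bar>t\<bar>) ^ q" unfolding N_def using dt(1) by (intro power_mono) auto
      also have "\<dots> \<le> (M * \<bar>t\<bar>) ^ 1" using dt(4) M0 q1 by (intro power_decreasing) auto
      finally have Nq: "N ^ q \<le> M * \<bar>t\<bar>" by simp
      have "\<bar>c / t * J \<alpha> t\<bar> = c / \<bar>t\<bar> * \<bar>J \<alpha> t\<bar>" using c0 by (simp add: abs_mult)
      also have "\<dots> \<le> c / \<bar>t\<bar> * B" using dt(2) c0 by (intro mult_left_mono) auto
      finally have Jb: "\<bar>c / t * J \<alpha> t\<bar> \<le> c / \<bar>t\<bar> * B" .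
      have "N ^ q * \<bar>c / t * J \<alpha> t\<bar> \<le> (M * \<bar>t\<bar>) * (c / \<bar>t\<bar> * B)"
        using Nq Jb M0 by (intro mult_mono) auto
      also have "\<dots> = c * (M * B)" using t(1) by (simp add: field_simps)
      also have "\<dots> \<le> 1" by (rule cMB)
      finally show ?thesis unfolding js N_def q_def .
    qed
  qed
  have seqlim: "\<exists>L. ((\<lambda>j. c * ((G (x + T j *\<^sub>R e) - G x) / T j)) \<longlongrightarrow> L) sequentially
      \<and> (\<phi> x, \<lambda>\<beta>. c * Psi p \<phi> (i # js) x \<beta>, L) \<in> Lk p X f (Suc k)"
    if T: "\<And>j. T j \<in> ball 0 \<delta> - {0}" "T \<longlonglongrightarrow> 0" for T
  proof -
    have Tj: "T j \<noteq> 0" "\<bar>T j\<bar> < \<delta>" for j using T(1)[of j] by auto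
    have TV: "x + T j *\<^sub>R e \<in> V" for j using \<delta>(2)[of "T j"] Tj[of j] by (auto simp: dist_real_def)
    have xT: "(\<lambda>j. x + T j *\<^sub>R e) \<longlonglongrightarrow> x"
      using tendsto_add[OF tendsto_const tendsto_scaleR[OF T(2) tendsto_const], of x e] by simp
    have phT: "(\<lambda>j. \<phi> (x + T j *\<^sub>R e)) \<longlonglongrightarrow> \<phi> x"
      using continuous_on_tendsto_compose[OF Ck_map_cont[OF C\<phi>] xT xV] TV by (simp add: o_def)
    have gs: "goodseq p X f k (\<phi> x) (\<lambda>\<beta>. c * Psi p \<phi> (i # js) x \<beta>) (\<lambda>j. \<phi> x) (\<lambda>j. \<phi> (x + T j *\<^sub>R e))
        (\<lambda>j \<beta>. (- c / T j) * Psi p \<phi> js x \<beta>) (\<lambda>j. (- c / T j) * G x)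
        (\<lambda>j \<beta>. (c / T j) * Psi p \<phi> js (x + T j *\<^sub>R e) \<beta>) (\<lambda>j. (c / T j) * G (x + T j *\<^sub>R e))"
      unfolding goodseq_def
    proof (intro conjI allI ballI)
      fix j
      show "(\<phi> x, \<lambda>\<beta>. - c / T j * Psi p \<phi> js x \<beta>, - c / T j * G x) \<in> Lk p X f k"
        by (rule Lk_scale[OF IH'[OF xV]])
      show "(\<phi> (x + T j *\<^sub>R e), \<lambda>\<beta>. c / T j * Psi p \<phi> js (x + T j *\<^sub>R e) \<beta>, c / T j * G (x + T j *\<^sub>R e)) \<in> Lk p X f k"
        by (rule Lk_scale[OF IH'[OF TV]])
      fix \<alpha> :: "'n \<Rightarrow> nat" assume "\<alpha> \<in> MI p"
      then show "norm (\<phi> x - \<phi> (x + T j *\<^sub>R e)) ^ (p - mi_abs \<alpha>) *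
          \<bar>jet p (\<lambda>\<beta>. c / T j * Psi p \<phi> js (x + T j *\<^sub>R e) \<beta>) \<alpha> (\<phi> (x + T j *\<^sub>R e))\<bar> \<le> 1"
        using bound Tj by blast
    next
      show "(\<lambda>j. \<phi> x) \<longlonglongrightarrow> \<phi> x" by simp
      show "(\<lambda>j. \<phi> (x + T j *\<^sub>R e)) \<longlonglongrightarrow> \<phi> x" by (rule phT)
      show "(\<lambda>j \<beta>. - c / T j * Psi p \<phi> js x \<beta> + c / T j * Psi p \<phi> js (x + T j *\<^sub>R e) \<beta>)
          \<longlonglongrightarrow> (\<lambda>\<beta>. c * Psi p \<phi> (i # js) x \<beta>)"
        unfolding tendsto_fun_iff
      proof
        fix \<beta> :: "'n \<Rightarrow> nat"
        show "(\<lambda>j. - c / T j * Psi p \<phi> js x \<beta> + c / T j * Psi p \<phi> js (x + T j *\<^sub>R e) \<beta>)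
          \<longlonglongrightarrow> c * Psi p \<phi> (i # js) x \<beta>"
        proof (cases "\<beta> \<in> MI p")
          case False then show ?thesis by (simp add: Psi_def)
        next
          case True
          define h where "h t = partial_iter js (\<lambda>z. mono \<beta> (\<phi> z)) (x + t *\<^sub>R e)" for t
          have "(\<lambda>t. partial_iter js (\<lambda>z. mono \<beta> (\<phi> z)) (x + t *\<^sub>R axis i 1)) differentiable (at 0)"
            by (rule Ck_pi_diff[OF Ck_comp_mono[OF oV C\<phi>] lp xV])
          then have "(h has_real_derivative partial i (partial_iter js (\<lambda>z. mono \<beta> (\<phi> z))) x) (at 0)"
            unfolding h_def e_def by (rule line_DERIV)
          then have "((\<lambda>y. (h y - h 0) / (y - 0)) \<longlongrightarrow> partial i (partial_iter js (\<lambda>z. mono \<beta> (\<phi> z))) x) (at 0)"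
            using has_field_derivative_iff by blast
          then have "((\<lambda>y. (h y - h 0) / (y - 0)) \<circ> T) \<longlonglongrightarrow> partial i (partial_iter js (\<lambda>z. mono \<beta> (\<phi> z))) x"
            unfolding tendsto_at_iff_sequentially[where s=UNIV, simplified] using Tj(1) T(2) by blast
          then have "(\<lambda>j. c * ((h (T j) - h 0) / T j)) \<longlonglongrightarrow> c * partial i (partial_iter js (\<lambda>z. mono \<beta> (\<phi> z))) x"
            by (intro tendsto_mult tendsto_const) (simp add: o_def)
          moreover have "c * ((h (T j) - h 0) / T j) = - c / T j * Psi p \<phi> js x \<beta> + c / T j * Psi p \<phi> js (x + T j *\<^sub>R e) \<beta>" for j
            using True Tj(1)[of j] unfolding h_def Psi_def by (simp add: field_simps)
          moreover have "Psi p \<phi> (i # js) x \<beta> = partial i (partial_iter js (\<lambda>z. mono \<beta> (\<phi> z))) x"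
            using True unfolding Psi_def by simp
          ultimately show ?thesis by simp
        qed
      qed
    qed
    obtain L where L: "(\<lambda>j. - c / T j * G x + c / T j * G (x + T j *\<^sub>R e)) \<longlonglongrightarrow> L"
        "(\<phi> x, \<lambda>\<beta>. c * Psi p \<phi> (i # js) x \<beta>, L) \<in> Lk p X f (Suc k)"
      using keylim[OF nf kK aX gs] by blast
    have "c * ((G (x + T j *\<^sub>R e) - G x) / T j) = - c / T j * G x + c / T j * G (x + T j *\<^sub>R e)" for j
      using Tj(1)[of j] by (simp add: field_simps)
    then show ?thesis using L by auto
  qed
  define T0 where "T0 j = \<delta> / 2 * inverse (real (Suc j))" for j
  have T0: "\<And>j. T0 j \<in> ball 0 \<delta> - {0}" "T0 \<longlonglongrightarrow> 0"
  proof -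
    fix j
    have "inverse (real (Suc j)) \<le> 1" by (simp add: inverse_le_1_iff)
    then have "\<delta> / 2 * inverse (real (Suc j)) \<le> \<delta> / 2" using \<delta>(1) by (intro mult_left_le) auto
    then show "T0 j \<in> ball 0 \<delta> - {0}" using \<delta>(1) unfolding T0_def by auto
  next
    show "T0 \<longlonglongrightarrow> 0" unfolding T0_def using tendsto_mult[OF tendsto_const LIMSEQ_inverse_real_of_nat, of "\<delta>/2"] by simp
  qed
  obtain L0 where L0: "(\<phi> x, \<lambda>\<beta>. c * Psi p \<phi> (i # js) x \<beta>, L0) \<in> Lk p X f (Suc k)"
    using seqlim[OF T0] by blast
  have qlim: "((\<lambda>t. (G (x + t *\<^sub>R e) - G x) / t) \<longlongrightarrow> L0 / c) (at 0)"
  proof -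
    have "((\<lambda>t. (G (x + t *\<^sub>R e) - G x) / t) \<longlongrightarrow> L0 / c) (at 0 within ball 0 \<delta>)"
      unfolding tendsto_at_iff_sequentially
    proof (intro allI impI)
      fix T :: "nat \<Rightarrow> real" assume T: "\<forall>n. T n \<in> ball 0 \<delta> - {0}" "T \<longlonglongrightarrow> 0"
      obtain L where L: "(\<lambda>j. c * ((G (x + T j *\<^sub>R e) - G x) / T j)) \<longlonglongrightarrow> L"
          "(\<phi> x, \<lambda>\<beta>. c * Psi p \<phi> (i # js) x \<beta>, L) \<in> Lk p X f (Suc k)"
        using seqlim[of T] T by blast
      have "L = L0" using Lk_uniq[OF nf kK L(2) L0] .
      then have "(\<lambda>j. c * ((G (x + T j *\<^sub>R e) - G x) / T j) / c) \<longlonglongrightarrow> L0 / c"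
        using L(1) c0 by (intro tendsto_divide tendsto_const) auto
      then show "((\<lambda>t. (G (x + t *\<^sub>R e) - G x) / t) \<circ> T) \<longlonglongrightarrow> L0 / c" using c0 by (simp add: o_def)
    qed
    moreover have "at (0::real) within ball 0 \<delta> = at 0" using \<delta>(1) by (intro at_within_open) auto
    ultimately show ?thesis by metis
  qed
  have D: "((\<lambda>t. G (x + t *\<^sub>R e)) has_real_derivative L0 / c) (at 0)"
    unfolding has_field_derivative_iff using qlim by simp
  have "(\<phi> x, \<lambda>\<beta>. (1 / c) * (c * Psi p \<phi> (i # js) x \<beta>), (1 / c) * L0) \<in> Lk p X f (Suc k)"
    by (rule Lk_scale[OF L0])
  moreover have "(\<lambda>\<beta>. (1 / c) * (c * Psi p \<phi> (i # js) x \<beta>)) = Psi p \<phi> (i # js) x" using c0 by simp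
  ultimately have "(\<phi> x, Psi p \<phi> (i # js) x, L0 / c) \<in> Lk p X f (Suc k)" by simp
  then show ?thesis using D unfolding G_def e_def k_def by blast
qed

end


lemma fredholm:
  fixes S :: "(('a \<Rightarrow> real) \<times> real) set"
  assumes "finite D"
    and "\<forall>u\<in>S. \<forall>v\<in>S. \<forall>r s. ((\<lambda>x. r * fst u x + s * fst v x), r * snd u + s * snd v) \<in> S"
    and "\<forall>u\<in>S. fst u = (\<lambda>_. 0) \<longrightarrow> snd u = 0"
    and "\<forall>u\<in>S. \<forall>x. x \<notin> D \<longrightarrow> fst u x = 0"
  shows "\<exists>c. \<forall>u\<in>S. (\<Sum>x\<in>D. c x * fst u x) = snd u"
  using assms
proof (induction D arbitrary: S rule: finite_induct)
  case empty
  have "\<forall>u\<in>S. snd u = 0"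
  proof
    fix u assume u: "u \<in> S"
    then have "fst u = (\<lambda>_. 0)" using empty(3) by auto
    then show "snd u = 0" using empty(2) u by blast
  qed
  then show ?case by simp
next
  case (insert d D)
  show ?case
  proof (cases "\<forall>u\<in>S. fst u d = 0")
    case True
    have supp: "\<forall>u\<in>S. \<forall>x. x \<notin> D \<longrightarrow> fst u x = 0"
    proof (intro ballI allI impI)
      fix u x assume u: "u \<in> S" and x: "x \<notin> D"
      show "fst u x = 0"
      proof (cases "x = d")
        case True then show ?thesis using \<open>\<forall>u\<in>S. fst u d = 0\<close> u by simp
      next
        case False then have "x \<notin> insert d D" using x by simp
        then show ?thesis using insert.prems(3) u by simp
      qed
    qed
    obtain c where c: "\<forall>u\<in>S. (\<Sum>x\<in>D. c x * fst u x) = snd u" using insert.IH[OF insert.prems(1) insert.prems(2) supp] by blast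
    have "\<forall>u\<in>S. (\<Sum>x\<in>insert d D. c x * fst u x) = snd u" using c True insert.hyps by simp
    then show ?thesis by blast
  next
    case False
    then obtain u0 where u0: "u0 \<in> S" "fst u0 d \<noteq> 0" by blast
    define w where "w = ((\<lambda>x. (1 / fst u0 d) * fst u0 x + 0 * fst u0 x), (1 / fst u0 d) * snd u0 + 0 * snd u0)"
    have wS: "w \<in> S" unfolding w_def by (rule insert.prems(1)[rule_format, OF u0(1) u0(1)])
    have wd: "fst w d = 1" unfolding w_def using u0(2) by simp
    define F where "F u = ((\<lambda>x. fst u x - fst u d * fst w x), snd u - fst u d * snd w)" for u
    define S' where "S' = F ` S"
    have FS: "F u \<in> S" if "u \<in> S" for u
    proof -
      have "((\<lambda>x. 1 * fst u x + (- fst u d) * fst w x), 1 * snd u + (- fst u d) * snd w) \<in> S"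
        by (rule insert.prems(1)[rule_format, OF that wS])
      then show ?thesis unfolding F_def by simp
    qed
    have S'S: "S' \<subseteq> S" unfolding S'_def using FS by blast
    have 1: "\<forall>u\<in>S'. \<forall>v\<in>S'. \<forall>r s. ((\<lambda>x. r * fst u x + s * fst v x), r * snd u + s * snd v) \<in> S'"
    proof (intro ballI allI)
      fix u' v' r s assume "u' \<in> S'" "v' \<in> S'"
      then obtain u v where uv: "u \<in> S" "v \<in> S" "u' = F u" "v' = F v" unfolding S'_def by blast
      define z where "z = ((\<lambda>x. r * fst u x + s * fst v x), r * snd u + s * snd v)"
      have zS: "z \<in> S" unfolding z_def by (rule insert.prems(1)[rule_format, OF uv(1) uv(2)])
      have "F z = ((\<lambda>x. r * fst u' x + s * fst v' x), r * snd u' + s * snd v')"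
        unfolding z_def F_def uv(3,4) by (simp add: algebra_simps)
      then show "((\<lambda>x. r * fst u' x + s * fst v' x), r * snd u' + s * snd v') \<in> S'"
        unfolding S'_def using zS by (metis image_eqI)
    qed
    have 2: "\<forall>u\<in>S'. fst u = (\<lambda>_. 0) \<longrightarrow> snd u = 0"
    proof (intro ballI impI)
      fix u assume "u \<in> S'" "fst u = (\<lambda>_. 0)"
      then show "snd u = 0" using insert.prems(2) S'S by (meson subsetD)
    qed
    have 3: "\<forall>u\<in>S'. \<forall>x. x \<notin> D \<longrightarrow> fst u x = 0"
    proof (intro ballI allI impI)
      fix u' x assume u': "u' \<in> S'" and x: "x \<notin> D"
      then obtain u where u: "u \<in> S" "u' = F u" unfolding S'_def by blast
      show "fst u' x = 0"
      proof (cases "x = d")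
        case True then show ?thesis using u wd unfolding F_def by simp
      next
        case False
        then have nx: "x \<notin> insert d D" using x by simp
        have "fst u x = 0" "fst w x = 0" using insert.prems(3) u(1) wS nx by simp_all
        then show ?thesis using u unfolding F_def by simp
      qed
    qed
    obtain c' where c': "\<forall>u\<in>S'. (\<Sum>x\<in>D. c' x * fst u x) = snd u" using insert.IH[OF 1 2 3] by blast
    define c where "c = c'(d := snd w - (\<Sum>x\<in>D. c' x * fst w x))"
    have "(\<Sum>x\<in>insert d D. c x * fst u x) = snd u" if u: "u \<in> S" for u
    proof -
      have Fu: "F u \<in> S'" unfolding S'_def using u by blast
      have e1: "(\<Sum>x\<in>D. c' x * (fst u x - fst u d * fst w x)) = snd u - fst u d * snd w"
        using c'[rule_format, OF Fu] unfolding F_def by simp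
      have e2: "(\<Sum>x\<in>D. c' x * (fst u x - fst u d * fst w x)) = (\<Sum>x\<in>D. c' x * fst u x) - fst u d * (\<Sum>x\<in>D. c' x * fst w x)"
        by (simp add: algebra_simps sum_subtractf sum_distrib_left)
      have e3: "(\<Sum>x\<in>D. c x * fst u x) = (\<Sum>x\<in>D. c' x * fst u x)"
        unfolding c_def using insert.hyps(2) by (intro sum.cong) auto
      have "(\<Sum>x\<in>insert d D. c x * fst u x) = c d * fst u d + (\<Sum>x\<in>D. c' x * fst u x)"
        using insert.hyps e3 by simp
      also have "\<dots> = snd u" using e1 e2 unfolding c_def by (simp add: algebra_simps)
      finally show ?thesis .
    qed
    then show ?thesis by blast
  qed
qed

context
  fixes p :: nat and V :: "(real^'m::finite) set" and \<phi> :: "real^'m \<Rightarrow> real^'n::finite"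
    and X :: "(real^'n) set" and f :: "real^'n \<Rightarrow> real"
  assumes oV: "open V" and C\<phi>: "Ck_map p V \<phi>" and \<phi>V: "\<phi> ` V \<subseteq> X" and nf: "nabla_is_function p X f"
begin

lemma inv: "length js \<le> p \<Longrightarrow> \<forall>y\<in>V. (\<phi> y, Psi p \<phi> js y, partial_iter js (f \<circ> \<phi>) y) \<in> Lk p X f (length js)"
proof (induction js)
  case Nil
  show ?case
  proof
    fix y assume y: "y \<in> V"
    have "Psi p \<phi> [] y = (\<lambda>\<alpha>. 1 * delta p (\<phi> y) \<alpha>)" by (rule ext) (simp add: Psi_def delta_def)
    moreover have "\<phi> y \<in> X" using y \<phi>V by blast
    ultimately have "(\<phi> y, Psi p \<phi> [] y, (f \<circ> \<phi>) y) \<in> Phi0 p X f"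
      unfolding Phi0_def by (simp del: mult_1 mult_1_left) (rule exI[of _ 1], simp)
    then show "(\<phi> y, Psi p \<phi> [] y, partial_iter [] (f \<circ> \<phi>) y) \<in> Lk p X f (length [])" by (simp add: Lk_def)
  qed
next
  case (Cons i js)
  have lp: "length js < p" using Cons.prems by simp
  have IH: "\<forall>y\<in>V. (\<phi> y, Psi p \<phi> js y, partial_iter js (f \<circ> \<phi>) y) \<in> Lk p X f (length js)" by (rule Cons.IH[OF less_imp_le[OF lp]])
  show ?case
  proof
    fix y assume y: "y \<in> V"
    obtain D where D: "((\<lambda>t. partial_iter js (f \<circ> \<phi>) (y + t *\<^sub>R axis i 1)) has_real_derivative D) (at 0)"
      "(\<phi> y, Psi p \<phi> (i # js) y, D) \<in> Lk p X f (Suc (length js))"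
      using derivstep[OF oV C\<phi> \<phi>V nf lp IH y] by blast
    have "partial_iter (i # js) (f \<circ> \<phi>) y = D" using D(1) by (simp add: partial_def DERIV_imp_deriv)
    then show "(\<phi> y, Psi p \<phi> (i # js) y, partial_iter (i # js) (f \<circ> \<phi>) y) \<in> Lk p X f (length (i # js))"
      using D(2) by simp
  qed
qed

lemma part1: "Ck p V (f \<circ> \<phi>)"
proof (rule Ck_of_partials)
  fix js :: "'m list" assume "length js \<le> p"
  then show "continuous_on V (partial_iter js (f \<circ> \<phi>))" using contstep[OF oV C\<phi> \<phi>V nf] inv by blast
next
  fix js :: "'m list" and i y assume lp: "length js < p" and y: "y \<in> V"
  obtain D where D: "((\<lambda>t. partial_iter js (f \<circ> \<phi>) (y + t *\<^sub>R axis i 1)) has_real_derivative D) (at 0)"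
    using derivstep[OF oV C\<phi> \<phi>V nf lp _ y] inv lp by fastforce
  then show "(\<lambda>t. partial_iter js (f \<circ> \<phi>) (y + t *\<^sub>R axis i 1)) differentiable (at 0)"
    using real_differentiable_def by blast
qed

lemma part2:
  assumes aX: "a \<in> X"
  shows "\<exists>P\<in>polys p. \<forall>b\<in>V. \<phi> b = a \<longrightarrow> flat_at p (\<lambda>y. (f \<circ> \<phi>) y - P (\<phi> y)) b"
proof -
  define K where "K = KK TYPE('n) p"
  define S where "S = {(\<xi>, l). (a, \<xi>, l) \<in> Lk p X f K \<and> (\<forall>\<beta>. \<beta> \<notin> MI p \<longrightarrow> \<xi> \<beta> = 0)}"
  have 1: "\<forall>u\<in>S. \<forall>v\<in>S. \<forall>r s. ((\<lambda>x. r * fst u x + s * fst v x), r * snd u + s * snd v) \<in> S"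
    unfolding S_def using Lk_lin by auto
  have 2: "\<forall>u\<in>S. fst u = (\<lambda>_. 0) \<longrightarrow> snd u = 0"
    unfolding S_def using Lk_uniq0[OF nf, of K a] K_def by auto
  have 3: "\<forall>u\<in>S. \<forall>x. x \<notin> MI p \<longrightarrow> fst u x = 0" unfolding S_def by auto
  obtain c where c: "\<forall>u\<in>S. (\<Sum>x\<in>MI p. c x * fst u x) = snd u"
    using fredholm[OF finite_MI 1 2 3] by blast
  define P where "P = (\<lambda>y. \<Sum>\<alpha>\<in>MI p. c \<alpha> * mono \<alpha> y)"
  have Pp: "P \<in> polys p" unfolding polys_def P_def by blast
  have "flat_at p (\<lambda>y. (f \<circ> \<phi>) y - P (\<phi> y)) b" if b: "b \<in> V" "\<phi> b = a" for b
    unfolding flat_at_def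
  proof (intro allI impI)
    fix js :: "'m list" assume lp: "length js \<le> p"
    have CM: "\<And>\<beta>. \<beta> \<in> MI p \<Longrightarrow> Ck p V (\<lambda>w. mono \<beta> (\<phi> w))" using Ck_comp_mono[OF oV C\<phi>] by blast
    have CP: "Ck p V (\<lambda>y. P (\<phi> y))" unfolding P_def
      by (intro Ck_sum[OF oV finite_MI] Ck_cmult[OF oV] CM)
    have "partial_iter js (\<lambda>y. (f \<circ> \<phi>) y - P (\<phi> y)) b = partial_iter js (f \<circ> \<phi>) b - partial_iter js (\<lambda>y. P (\<phi> y)) b"
      by (rule pi_diff[OF oV part1 CP lp b(1)])
    moreover have "partial_iter js (\<lambda>y. P (\<phi> y)) b = (\<Sum>\<alpha>\<in>MI p. c \<alpha> * partial_iter js (\<lambda>w. mono \<alpha> (\<phi> w)) b)"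
      unfolding P_def by (rule pi_sum[OF oV finite_MI CM lp b(1)])
    moreover have "(\<Sum>\<alpha>\<in>MI p. c \<alpha> * partial_iter js (\<lambda>w. mono \<alpha> (\<phi> w)) b) = (\<Sum>\<alpha>\<in>MI p. c \<alpha> * Psi p \<phi> js b \<alpha>)"
      unfolding Psi_def by (rule sum.cong) auto
    moreover have "(Psi p \<phi> js b, partial_iter js (f \<circ> \<phi>) b) \<in> S"
    proof -
      have "(\<phi> b, Psi p \<phi> js b, partial_iter js (f \<circ> \<phi>) b) \<in> Lk p X f (length js)" using inv lp b(1) by blast
      moreover have "length js \<le> K" using KK_ge[OF oV C\<phi> \<phi>V nf] lp K_def by simp
      ultimately have "(a, Psi p \<phi> js b, partial_iter js (f \<circ> \<phi>) b) \<in> Lk p X f K" using Lk_mono_le b(2) by blast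
      then show ?thesis unfolding S_def by (simp add: Psi_def)
    qed
    ultimately show "partial_iter js (\<lambda>y. (f \<circ> \<phi>) y - P (\<phi> y)) b = 0" using c by fastforce
  qed
  then show ?thesis using Pp by blast
qed

end

theorem corollary5p3:
  fixes p :: nat
    and U :: "(real^'n::finite) set" and V :: "(real^'m::finite) set"
    and X :: "(real^'n) set"
    and \<phi> :: "real^'m \<Rightarrow> real^'n"
    and f :: "real^'n \<Rightarrow> real"
  assumes "open U" and "open V"
    and "X \<subseteq> U" and "closedin (top_of_set U) X"
    and "Ck_map p V \<phi>" and "\<phi> ` V \<subseteq> X"
    and "nabla_is_function p X f"
  shows "Ck p V (f \<circ> \<phi>)
    \<and> (\<forall>a\<in>X. \<exists>P\<in>polys p. \<forall>b\<in>V. \<phi> b = a \<longrightarrow> flat_at p (\<lambda>y. (f \<circ> \<phi>) y - P (\<phi> y)) b)"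
  using part1[OF assms(2,5,6,7)] part2[OF assms(2,5,6,7)] by blast


end
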